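(* Let $S$ be a monoid and $A$ an $S$-act. Then for every $n\in\mathbb N$ the $S$-act $A(n)$ is $n$-absolutely pure, and $A(\aleph_0)$ is absolutely pure. Further, $A$ is $n$-absolutely pure if and only if $A$ is a retract of $A(n)$, and $A$ is absolutely pure if and only if $A$ is a retract of $A(\aleph_0)$.
   Context: A (right) $S$-act is a set with an action $(a,s)\mapsto as$ with $a1=a$, $a(st)=(as)t$. Equations over $A$ have the forms $xs=yt$, $xs=xt$, $xs=a$ ($a\in A$); a set of them is consistent if it has a solution in some $S$-act containing $A$. $A$ is $n$-absolutely pure if every finite consistent set of equations over $A$ in at most $n$ variables has a solution in $A$; absolutely pure if this holds for all $n$; a retract of $B\supseteq A$ if some $S$-morphism $B\to A$ fixes $A$ pointwise. For a set $\Sigma$ of equations, $v(\Sigma)$ is the number of variables occurring, $H(\Sigma)=\{(xu,yv):xu=yv\in\Sigma\}$, $K(\Sigma)=\{(xs,a):xs=a\in\Sigma\}$. For any $S$-act $C$: let $\Theta(C,m)$ be all finite consistent sets $\Sigma$ over $C$ with $v(\Sigma)=m$, with variables chosen so that distinct sets (and distinct stages of the construction below) use pairwise disjoint, fresh variables; $\Omega_n$ is the set of variables of members of $\bigcup_{m\le n}\Theta(C,m)$, $\Omega_{\aleph_0}=\bigcup_n\Omega_n$; $C^n_1=(C\sqcup F_S(\Omega_n))/\kappa(n)$ where $\kappa(n)$ is generated by $\bigcup\{H(\Sigma)\cup K(\Sigma):\Sigma\in\Theta(C,m),m\le n\}$, and $C^{\aleph_0}_1$ is defined likewise using all $m$;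 $C$ embeds in these via $c\mapsto[c]$. Now set $A^n_0=A^{\aleph_0}_0=A$, $A^n_i=(A^n_{i-1})^n_1$ and $A^{\aleph_0}_i=(A^{\aleph_0}_{i-1})^{\aleph_0}_1$ for $i\ge1$, and $A(n)=\bigcup_{i}A^n_i$, $A(\aleph_0)=\bigcup_iA^{\aleph_0}_i$ (unions of chains of embeddings, so $A\subseteq A(n)$, $A\subseteq A(\aleph_0)$). *)

theory Defs
  imports Main "HOL-Library.FSet"
begin

definition is_act :: "'c set \<Rightarrow> ('c \<Rightarrow> 's::monoid_mult \<Rightarrow> 'c) \<Rightarrow> bool" where
  "is_act X act \<longleftrightarrow> (\<forall>a\<in>X. \<forall>s. act a s \<in> X) \<and> (\<forall>a\<in>X. act a 1 = a)
     \<and> (\<forall>a\<in>X. \<forall>s t. act a (s * t) = act (act a s) t)"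

definition is_morph :: "'c set \<Rightarrow> ('c \<Rightarrow> 's::monoid_mult \<Rightarrow> 'c) \<Rightarrow> 'b set \<Rightarrow> ('b \<Rightarrow> 's \<Rightarrow> 'b)
    \<Rightarrow> ('c \<Rightarrow> 'b) \<Rightarrow> bool" where
  "is_morph X act Y actY f \<longleftrightarrow> (\<forall>a\<in>X. f a \<in> Y) \<and> (\<forall>a\<in>X. \<forall>s. f (act a s) = actY (f a) s)"

text \<open>EqVV x s y t is the equation x s = y t (with x = y allowed, giving x s = x t);
  EqVC x s a is the equation x s = a.\<close>
datatype ('c, 's) eqn = EqVV nat 's nat 's | EqVC nat 's 'c

fun eqn_vars :: "('c, 's) eqn \<Rightarrow> nat set" where
  "eqn_vars (EqVV x s y t) = {x, y}"
| "eqn_vars (EqVC x s a) = {x}"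

fun eqn_consts :: "('c, 's) eqn \<Rightarrow> 'c set" where
  "eqn_consts (EqVV x s y t) = {}"
| "eqn_consts (EqVC x s a) = {a}"

fun eqn_map :: "('c \<Rightarrow> 'd) \<Rightarrow> ('c, 's) eqn \<Rightarrow> ('d, 's) eqn" where
  "eqn_map f (EqVV x s y t) = EqVV x s y t"
| "eqn_map f (EqVC x s a) = EqVC x s (f a)"

definition nvars :: "('c, 's) eqn fset \<Rightarrow> nat" where
  "nvars \<Sigma> = card (\<Union>e\<in>fset \<Sigma>. eqn_vars e)"

definition over :: "'c set \<Rightarrow> ('c, 's) eqn fset \<Rightarrow> bool" where
  "over X \<Sigma> \<longleftrightarrow> (\<forall>e\<in>fset \<Sigma>. eqn_consts e \<subseteq> X)"

definition solves :: "('b \<Rightarrow> 's::monoid_mult \<Rightarrow> 'b) \<Rightarrow> ('c \<Rightarrow> 'b) \<Rightarrow> (nat \<Rightarrow> 'b)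
    \<Rightarrow> ('c, 's) eqn fset \<Rightarrow> bool" where
  "solves actB f \<sigma> \<Sigma> \<longleftrightarrow> (\<forall>e\<in>fset \<Sigma>. case e of
       EqVV x s y t \<Rightarrow> actB (\<sigma> x) s = actB (\<sigma> y) t
     | EqVC x s a \<Rightarrow> actB (\<sigma> x) s = f a)"

text \<open>The witnessing act is taken with carrier in the type 'c + nat * 's, which is
  no loss of generality: the subact generated by the image of X and the values of a solution
  has at most |X| + |nat x S| elements.\<close>
definition consistent :: "'c set \<Rightarrow> ('c \<Rightarrow> 's::monoid_mult \<Rightarrow> 'c) \<Rightarrow> ('c, 's) eqn fset \<Rightarrow> bool" where
  "consistent X act \<Sigma> \<longleftrightarrow>
     (\<exists>(B :: ('c + nat \<times> 's) set) actB f \<sigma>. is_act B actB \<and> is_morph X act B actB f \<and> inj_on f X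
        \<and> (\<forall>k\<in>(\<Union>e\<in>fset \<Sigma>. eqn_vars e). \<sigma> k \<in> B) \<and> solves actB f \<sigma> \<Sigma>)"

definition n_abs_pure :: "nat \<Rightarrow> 'c set \<Rightarrow> ('c \<Rightarrow> 's::monoid_mult \<Rightarrow> 'c) \<Rightarrow> bool" where
  "n_abs_pure n X act \<longleftrightarrow> (\<forall>\<Sigma>. over X \<Sigma> \<and> nvars \<Sigma> \<le> n \<and> consistent X act \<Sigma>
       \<longrightarrow> (\<exists>\<sigma>. (\<forall>k\<in>(\<Union>e\<in>fset \<Sigma>. eqn_vars e). \<sigma> k \<in> X) \<and> solves act id \<sigma> \<Sigma>))"

definition abs_pure :: "'c set \<Rightarrow> ('c \<Rightarrow> 's::monoid_mult \<Rightarrow> 'c) \<Rightarrow> bool" where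
  "abs_pure X act \<longleftrightarrow> (\<forall>n. n_abs_pure n X act)"

definition is_retract :: "'c set \<Rightarrow> ('c \<Rightarrow> 's::monoid_mult \<Rightarrow> 'c) \<Rightarrow> 'b set \<Rightarrow> ('b \<Rightarrow> 's \<Rightarrow> 'b)
    \<Rightarrow> ('c \<Rightarrow> 'b) \<Rightarrow> bool" where
  "is_retract X act Y actY emb \<longleftrightarrow> (\<exists>g. is_morph Y actY X act g \<and> (\<forall>a\<in>X. g (emb a) = a))"

text \<open>Raw elements: Base a for a in A, and Gen i T k s, the element (x s) of the free act on the
  fresh variable x which is variable k of the system T at stage i.  T is the system over the
  previous stage with constants replaced by chosen representatives of their classes.\<close>
datatype ('a, 's) elt = Base 'a | Gen nat "(('a, 's) elt, 's) eqn fset" nat 's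

fun ract :: "('a \<Rightarrow> 's::monoid_mult \<Rightarrow> 'a) \<Rightarrow> ('a, 's) elt \<Rightarrow> 's \<Rightarrow> ('a, 's) elt" where
  "ract act (Base a) s = Base (act a s)"
| "ract act (Gen i T k u) s = Gen i T k (u * s)"

inductive_set congr :: "'b set \<Rightarrow> ('b \<Rightarrow> 's \<Rightarrow> 'b) \<Rightarrow> 'b rel \<Rightarrow> 'b rel"
  for D f R where
  gen: "(x, y) \<in> R \<Longrightarrow> (x, y) \<in> congr D f R"
| refl: "x \<in> D \<Longrightarrow> (x, x) \<in> congr D f R"
| sym: "(x, y) \<in> congr D f R \<Longrightarrow> (y, x) \<in> congr D f R"
| trans: "(x, y) \<in> congr D f R \<Longrightarrow> (y, z) \<in> congr D f R \<Longrightarrow> (x, z) \<in> congr D f R"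
| compat: "(x, y) \<in> congr D f R \<Longrightarrow> (f x s, f y s) \<in> congr D f R"

definition qact :: "'b rel \<Rightarrow> ('b \<Rightarrow> 's \<Rightarrow> 'b) \<Rightarrow> 'b set \<Rightarrow> 's \<Rightarrow> 'b set" where
  "qact E f X s = E `` ((\<lambda>x. f x s) ` X)"

definition rep :: "'b set \<Rightarrow> 'b" where
  "rep X = (SOME x. x \<in> X)"

definition tag :: "('b set, 's) eqn fset \<Rightarrow> ('b, 's) eqn fset" where
  "tag \<Sigma> = fimage (eqn_map rep) \<Sigma>"

text \<open>Stage i of the construction, represented as a set D of raw elements together with a
  congruence E; the act A_i is D // E.  P selects the admissible numbers of variables
  (P m = (m \<le> n) for A(n), P m = True for A(aleph_0)).  Stage i+1 is
  (C \<squnion> F_S(Omega))/kappa with C = D // E, realized as (D \<union> new generators) modulo the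
  congruence generated by E, H(Sigma), K(Sigma).\<close>
fun stage :: "(nat \<Rightarrow> bool) \<Rightarrow> 'a set \<Rightarrow> ('a \<Rightarrow> 's::monoid_mult \<Rightarrow> 'a) \<Rightarrow> nat
    \<Rightarrow> ('a, 's) elt set \<times> ('a, 's) elt rel" where
  "stage P A act 0 = (Base ` A, Id_on (Base ` A))"
| "stage P A act (Suc i) =
    (let D = fst (stage P A act i); E = snd (stage P A act i);
         C = D // E;
         Th = {\<Sigma>. over C \<Sigma> \<and> consistent C (qact E (ract act)) \<Sigma> \<and> P (nvars \<Sigma>)};
         N = {Gen (Suc i) (tag \<Sigma>) k s | \<Sigma> k s. \<Sigma> \<in> Th \<and> k \<in> (\<Union>e\<in>fset \<Sigma>. eqn_vars e)};
         H = {(Gen (Suc i) (tag \<Sigma>) x u, Gen (Suc i) (tag \<Sigma>) y v) | \<Sigma> x u y v.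
                \<Sigma> \<in> Th \<and> EqVV x u y v \<in> fset \<Sigma>};
         K = {(Gen (Suc i) (tag \<Sigma>) x s, rep a) | \<Sigma> x s a. \<Sigma> \<in> Th \<and> EqVC x s a \<in> fset \<Sigma>}
     in (D \<union> N, congr (D \<union> N) (ract act) (E \<union> H \<union> K)))"

definition ext_rel :: "(nat \<Rightarrow> bool) \<Rightarrow> 'a set \<Rightarrow> ('a \<Rightarrow> 's::monoid_mult \<Rightarrow> 'a) \<Rightarrow> ('a, 's) elt rel" where
  "ext_rel P A act = (\<Union>i. snd (stage P A act i))"

definition ext_carrier :: "(nat \<Rightarrow> bool) \<Rightarrow> 'a set \<Rightarrow> ('a \<Rightarrow> 's::monoid_mult \<Rightarrow> 'a)
    \<Rightarrow> ('a, 's) elt set set" where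
  "ext_carrier P A act = (\<Union>i. fst (stage P A act i)) // ext_rel P A act"

definition ext_act :: "(nat \<Rightarrow> bool) \<Rightarrow> 'a set \<Rightarrow> ('a \<Rightarrow> 's::monoid_mult \<Rightarrow> 'a)
    \<Rightarrow> ('a, 's) elt set \<Rightarrow> 's \<Rightarrow> ('a, 's) elt set" where
  "ext_act P A act = qact (ext_rel P A act) (ract act)"

definition ext_emb :: "(nat \<Rightarrow> bool) \<Rightarrow> 'a set \<Rightarrow> ('a \<Rightarrow> 's::monoid_mult \<Rightarrow> 'a)
    \<Rightarrow> 'a \<Rightarrow> ('a, 's) elt set" where
  "ext_emb P A act a = ext_rel P A act `` {Base a}"

abbreviation "An_carrier n \<equiv> ext_carrier (\<lambda>m. m \<le> n)"
abbreviation "An_act n \<equiv> ext_act (\<lambda>m. m \<le> n)"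
abbreviation "An_emb n \<equiv> ext_emb (\<lambda>m. m \<le> n)"
abbreviation "Aw_carrier \<equiv> ext_carrier (\<lambda>m. True)"
abbreviation "Aw_act \<equiv> ext_act (\<lambda>m. True)"
abbreviation "Aw_emb \<equiv> ext_emb (\<lambda>m. True)"

end

theory Submission
  imports Defs
begin


lemma is_actD:
  assumes "is_act X act" "a \<in> X"
  shows "act a s \<in> X" "act a 1 = a" "act a (s * t) = act (act a s) t"
  using assms by (auto simp: is_act_def)

lemma is_morphD:
  assumes "is_morph X act Y actY f" "a \<in> X"
  shows "f a \<in> Y" "f (act a s) = actY (f a) s"
  using assms by (auto simp: is_morph_def)

lemma act_transport:
  assumes act: "is_act G actM" and inj: "inj_on enc G"
  shows "is_act (enc ` G) (\<lambda>b s. enc (actM (inv_into G enc b) s))"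
    and "is_morph G actM (enc ` G) (\<lambda>b s. enc (actM (inv_into G enc b) s)) enc"
proof -
  have iv: "\<And>x. x \<in> G \<Longrightarrow> inv_into G enc (enc x) = x" using inj by simp
  show "is_act (enc ` G) (\<lambda>b s. enc (actM (inv_into G enc b) s))"
    unfolding is_act_def using act by (auto simp: iv is_act_def)
  show "is_morph G actM (enc ` G) (\<lambda>b s. enc (actM (inv_into G enc b) s)) enc"
    unfolding is_morph_def using act by (auto simp: iv is_act_def)
qed

lemma solves_def2:
  "solves actB f \<sigma> \<Sigma> \<longleftrightarrow>
     (\<forall>x s y t. EqVV x s y t \<in> fset \<Sigma> \<longrightarrow> actB (\<sigma> x) s = actB (\<sigma> y) t) \<and>
     (\<forall>x s a. EqVC x s a \<in> fset \<Sigma> \<longrightarrow> actB (\<sigma> x) s = f a)"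
  unfolding solves_def
  apply (rule iffI)
   apply (intro conjI allI impI)
    apply (drule (1) bspec, simp)
   apply (drule (1) bspec, simp)
  apply clarify
  subgoal for e by (cases e) auto
  done

lemma consistent_intro:
  fixes M :: "'m set" and X :: "'c set" and act :: "'c \<Rightarrow> 's::monoid_mult \<Rightarrow> 'c"
  assumes actX: "is_act X act" and actM: "is_act M actM" and hm: "is_morph X act M actM h" and inj: "inj_on h X"
    and sig: "\<forall>k\<in>(\<Union>e\<in>fset \<Sigma>. eqn_vars e). \<sigma> k \<in> M"
    and sol: "solves actM h \<sigma> \<Sigma>"
  shows "consistent X act \<Sigma>"
proof -
  define V where "V = (\<Union>e\<in>fset \<Sigma>. eqn_vars e)"
  define G where "G = h ` X \<union> {actM (\<sigma> k) s | k s. k \<in> V}"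
  define enc :: "'m \<Rightarrow> 'c + nat \<times> 's" where
    "enc y = (if y \<in> h ` X then Inl (inv_into X h y)
              else Inr (SOME ks. fst ks \<in> V \<and> actM (\<sigma> (fst ks)) (snd ks) = y))" for y
  have GM: "G \<subseteq> M" using actM hm sig unfolding G_def V_def by (auto simp: is_act_def is_morph_def)
  have actG: "is_act G actM"
    unfolding is_act_def
  proof (intro conjI ballI allI)
    fix a s assume "a \<in> G"
    then show "actM a s \<in> G"
    proof (unfold G_def, elim UnE imageE CollectE exE conjE)
      fix x assume "x \<in> X" "a = h x"
      then show "actM a s \<in> h ` X \<union> {actM (\<sigma> k) s | k s. k \<in> V}"
      proof -
        have "actM a s = h (act x s)" "act x s \<in> X"
          using hm actX \<open>x\<in>X\<close> \<open>a = h x\<close> by (auto simp: is_morph_def is_act_def)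
        then show ?thesis by blast
      qed
    next
      fix k u assume "a = actM (\<sigma> k) u" "k \<in> V"
      have "\<sigma> k \<in> M" using sig \<open>k\<in>V\<close> V_def by blast
      then have "actM a s = actM (\<sigma> k) (u * s)" using actM \<open>a = actM (\<sigma> k) u\<close> by (simp add: is_actD)
      then show "actM a s \<in> h ` X \<union> {actM (\<sigma> k) s | k s. k \<in> V}" using \<open>k\<in>V\<close> by blast
    qed
  next
    fix a assume "a \<in> G" then show "actM a 1 = a" using GM actM by (auto simp: is_act_def)
  next
    fix a s t assume "a \<in> G" then show "actM a (s * t) = actM (actM a s) t"
      using GM actM by (auto simp: is_act_def)
  qed
  have injG: "inj_on enc G"
  proof (rule inj_onI)
    fix y z assume y: "y \<in> G" and z: "z \<in> G" and e: "enc y = enc z"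
    show "y = z"
    proof (cases "y \<in> h ` X")
      case True
      then show ?thesis
      proof (cases "z \<in> h ` X")
        case True
        with \<open>y \<in> h ` X\<close> e show ?thesis by (auto simp: enc_def inj inv_into_f_f)
      next
        case False with True e show ?thesis by (simp add: enc_def)
      qed
    next
      case False
      then have yy: "\<exists>ks. fst ks \<in> V \<and> actM (\<sigma> (fst ks)) (snd ks) = y" using y G_def by auto
      show ?thesis
      proof (cases "z \<in> h ` X")
        case True with False e show ?thesis by (simp add: enc_def)
      next
        case Fz: False
        then have zz: "\<exists>ks. fst ks \<in> V \<and> actM (\<sigma> (fst ks)) (snd ks) = z" using z G_def by auto
        from e False Fz have "(SOME ks. fst ks \<in> V \<and> actM (\<sigma> (fst ks)) (snd ks) = y)
            = (SOME ks. fst ks \<in> V \<and> actM (\<sigma> (fst ks)) (snd ks) = z)" by (simp add: enc_def)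
        with someI_ex[OF yy] someI_ex[OF zz] show ?thesis by metis
      qed
    qed
  qed
  define actB where "actB = (\<lambda>b s. enc (actM (inv_into G enc b) s))"
  have B1: "is_act (enc ` G) actB" using act_transport(1)[OF actG injG] by (simp add: actB_def)
  have B2: "is_morph G actM (enc ` G) actB enc" using act_transport(2)[OF actG injG] by (simp add: actB_def)
  have hG: "\<And>x. x \<in> X \<Longrightarrow> h x \<in> G" by (simp add: G_def)
  have sG: "\<And>k. k \<in> V \<Longrightarrow> \<sigma> k \<in> G"
  proof -
    fix k assume "k \<in> V"
    then have "actM (\<sigma> k) 1 \<in> G" unfolding G_def by blast
    moreover have "\<sigma> k \<in> M" using sig \<open>k\<in>V\<close> V_def by blast
    ultimately show "\<sigma> k \<in> G" using actM by (simp add: is_actD)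
  qed
  have m: "is_morph X act (enc ` G) actB (enc \<circ> h)"
    using hm B2 hG unfolding is_morph_def by auto
  have i: "inj_on (enc \<circ> h) X"
    using inj injG hG by (auto simp: inj_on_def)
  have s: "\<forall>k\<in>V. (enc \<circ> \<sigma>) k \<in> enc ` G" using sG by auto
  have eqa: "\<And>k s. k \<in> V \<Longrightarrow> actB (enc (\<sigma> k)) s = enc (actM (\<sigma> k) s)"
    using B2 sG by (auto simp: is_morph_def)
  have sv: "\<And>e. e \<in> fset \<Sigma> \<Longrightarrow> eqn_vars e \<subseteq> V" using V_def by auto
  have so: "solves actB (enc \<circ> h) (enc \<circ> \<sigma>) \<Sigma>"
    unfolding solves_def2
  proof (intro conjI allI impI)
    fix x s y t assume e: "EqVV x s y t \<in> fset \<Sigma>"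
    then have "x \<in> V" "y \<in> V" using sv[OF e] by auto
    then show "actB ((enc \<circ> \<sigma>) x) s = actB ((enc \<circ> \<sigma>) y) t"
      using sol e by (simp add: eqa solves_def2)
  next
    fix x s a assume e: "EqVC x s a \<in> fset \<Sigma>"
    then have "x \<in> V" using sv[OF e] by auto
    then show "actB ((enc \<circ> \<sigma>) x) s = (enc \<circ> h) a"
      using sol e by (simp add: eqa solves_def2)
  qed
  have s': "\<forall>k\<in>(\<Union>e\<in>fset \<Sigma>. eqn_vars e). (enc \<circ> \<sigma>) k \<in> enc ` G"
    using s unfolding V_def .
  have "is_act (enc ` G) actB \<and> is_morph X act (enc ` G) actB (enc \<circ> h) \<and> inj_on (enc \<circ> h) X \<and>
     (\<forall>k\<in>(\<Union>e\<in>fset \<Sigma>. eqn_vars e). (enc \<circ> \<sigma>) k \<in> enc ` G) \<and> solves actB (enc \<circ> h) (enc \<circ> \<sigma>) \<Sigma>"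
    using B1 m i s' so by simp
  then show ?thesis unfolding consistent_def
    apply -
    apply (rule exI[where x="enc ` G"])
    apply (rule exI[where x=actB])
    apply (rule exI[where x="enc \<circ> h"])
    apply (rule exI[where x="enc \<circ> \<sigma>"])
    apply assumption
    done
qed

lemma consistentE:
  fixes X :: "'c set" and act :: "'c \<Rightarrow> 's::monoid_mult \<Rightarrow> 'c"
  assumes "consistent X act \<Sigma>"
  obtains B actB f \<sigma> where "is_act (B :: ('c + nat \<times> 's) set) actB" "is_morph X act B actB f" "inj_on f X"
    "\<forall>k\<in>(\<Union>e\<in>fset \<Sigma>. eqn_vars e). \<sigma> k \<in> B" "solves actB f \<sigma> \<Sigma>"
  using assms unfolding consistent_def
  apply (elim exE conjE)
  apply (rule that)
  by assumption+




definition amal_emb :: "'c set \<Rightarrow> ('c \<Rightarrow> 'x) \<Rightarrow> ('j \<Rightarrow> 'c \<Rightarrow> 'b) \<Rightarrow> 'j \<Rightarrow> 'b \<Rightarrow> 'x + 'j \<times> 'b" where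
  "amal_emb C g f j b = (if b \<in> f j ` C then Inl (g (inv_into C (f j) b)) else Inr (j, b))"

definition amal_act :: "'c set \<Rightarrow> ('c \<Rightarrow> 'x) \<Rightarrow> ('j \<Rightarrow> 'c \<Rightarrow> 'b) \<Rightarrow> ('x \<Rightarrow> 's \<Rightarrow> 'x)
   \<Rightarrow> ('j \<Rightarrow> 'b \<Rightarrow> 's \<Rightarrow> 'b) \<Rightarrow> 'x + 'j \<times> 'b \<Rightarrow> 's \<Rightarrow> 'x + 'j \<times> 'b" where
  "amal_act C g f actX actB m s = (case m of Inl x \<Rightarrow> Inl (actX x s)
      | Inr jb \<Rightarrow> amal_emb C g f (fst jb) (actB (fst jb) (snd jb) s))"

definition amal_car :: "'c set \<Rightarrow> ('j \<Rightarrow> 'c \<Rightarrow> 'b) \<Rightarrow> 'x set \<Rightarrow> 'j set \<Rightarrow> ('j \<Rightarrow> 'b set)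
   \<Rightarrow> ('x + 'j \<times> 'b) set" where
  "amal_car C f X J B = Inl ` X \<union> {Inr (j, b) | j b. j \<in> J \<and> b \<in> B j \<and> b \<notin> f j ` C}"

locale amal =
  fixes C :: "'c set" and actC :: "'c \<Rightarrow> 's::monoid_mult \<Rightarrow> 'c"
    and X :: "'x set" and actX :: "'x \<Rightarrow> 's \<Rightarrow> 'x" and g :: "'c \<Rightarrow> 'x"
    and J :: "'j set" and B :: "'j \<Rightarrow> 'b set" and actB :: "'j \<Rightarrow> 'b \<Rightarrow> 's \<Rightarrow> 'b"
    and f :: "'j \<Rightarrow> 'c \<Rightarrow> 'b"
  assumes actC: "is_act C actC" and actX: "is_act X actX" and gm: "is_morph C actC X actX g"
    and actB: "\<And>j. j \<in> J \<Longrightarrow> is_act (B j) (actB j)"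
    and fm: "\<And>j. j \<in> J \<Longrightarrow> is_morph C actC (B j) (actB j) (f j)"
    and fi: "\<And>j. j \<in> J \<Longrightarrow> inj_on (f j) C"
begin

abbreviation "M \<equiv> amal_car C f X J B"
abbreviation "actM \<equiv> amal_act C g f actX actB"
abbreviation "emb \<equiv> amal_emb C g f"

lemma emb_f: "j \<in> J \<Longrightarrow> c \<in> C \<Longrightarrow> emb j (f j c) = Inl (g c)"
  using fi by (simp add: amal_emb_def)

lemma emb_in: "j \<in> J \<Longrightarrow> b \<in> B j \<Longrightarrow> emb j b \<in> M"
  using gm fi by (auto simp: amal_emb_def amal_car_def is_morph_def)

lemma emb_act: assumes j: "j \<in> J" and b: "b \<in> B j"
  shows "actM (emb j b) t = emb j (actB j b t)"
proof (cases "b \<in> f j ` C")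
  case True
  then obtain c where c: "c \<in> C" "b = f j c" by auto
  have "actB j b t = f j (actC c t)" using fm[OF j] c by (simp add: is_morph_def)
  moreover have "actC c t \<in> C" using actC c by (simp add: is_actD)
  ultimately have r: "emb j (actB j b t) = Inl (g (actC c t))" using emb_f j by simp
  have "actM (emb j b) t = Inl (actX (g c) t)" using emb_f[OF j c(1)] c by (simp add: amal_act_def)
  also have "\<dots> = Inl (g (actC c t))" using gm c by (simp add: is_morph_def)
  finally show ?thesis using r by simp
next
  case False
  then show ?thesis by (simp add: amal_emb_def amal_act_def)
qed

lemma M_act: "is_act M actM"
  unfolding is_act_def
proof (intro conjI ballI allI)
  fix m s assume "m \<in> M"
  then show "actM m s \<in> M"
  proof (unfold amal_car_def, elim UnE imageE CollectE exE conjE)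
    fix x assume "x \<in> X" "m = Inl x"
    then show "actM m s \<in> Inl ` X \<union> {Inr (j, b) | j b. j \<in> J \<and> b \<in> B j \<and> b \<notin> f j ` C}"
      using actX by (auto simp: amal_act_def is_act_def)
  next
    fix j b assume "m = Inr (j, b)" "j \<in> J" "b \<in> B j"
    then show "actM m s \<in> Inl ` X \<union> {Inr (j, b) | j b. j \<in> J \<and> b \<in> B j \<and> b \<notin> f j ` C}"
      using emb_in[of j "actB j b s"] actB[of j] by (simp add: amal_act_def is_actD amal_car_def)
  qed
next
  fix m assume "m \<in> M"
  then show "actM m 1 = m"
    using actX actB by (auto simp: amal_car_def amal_act_def amal_emb_def is_act_def)
next
  fix m s t assume "m \<in> M"
  then show "actM m (s * t) = actM (actM m s) t"
  proof (unfold amal_car_def, elim UnE imageE CollectE exE conjE)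
    fix x assume "x \<in> X" "m = Inl x"
    then show ?thesis using actX by (auto simp: amal_act_def is_act_def)
  next
    fix j b assume m: "m = Inr (j, b)" "j \<in> J" "b \<in> B j"
    have "actM m (s * t) = emb j (actB j (actB j b s) t)"
      using m actB[of j] by (simp add: amal_act_def is_actD)
    also have "\<dots> = actM (emb j (actB j b s)) t"
      using emb_act[of j "actB j b s" t] m actB[of j] by (simp add: is_actD)
    also have "\<dots> = actM (actM m s) t" using m by (simp add: amal_act_def)
    finally show ?thesis .
  qed
qed

lemma Inl_morph: "is_morph X actX M actM Inl"
  by (auto simp: is_morph_def amal_car_def amal_act_def)

lemma emb_morph: "j \<in> J \<Longrightarrow> is_morph (B j) (actB j) M actM (emb j)"
  using emb_in emb_act by (auto simp: is_morph_def)

end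




lemma congr_sub:
  assumes "R \<subseteq> D \<times> D" "\<forall>x\<in>D. \<forall>s. f x s \<in> D" "(x, y) \<in> congr D f R"
  shows "x \<in> D \<and> y \<in> D"
  using assms(3) by induction (use assms(1,2) in auto)

lemma congr_kernel:
  assumes R: "R \<subseteq> D \<times> D" and cl: "\<forall>x\<in>D. \<forall>s. f x s \<in> D"
    and hm: "\<forall>x\<in>D. \<forall>s. h (f x s) = F (h x) s" and hR: "\<forall>(x, y)\<in>R. h x = h y"
    and xy: "(x, y) \<in> congr D f R"
  shows "h x = h y"
  using xy
proof induction
  case (compat x y s)
  then have "x \<in> D" "y \<in> D" using congr_sub[OF R cl] by blast+
  with compat hm show ?case by simp
qed (use hR in auto)

definition good :: "'a set \<Rightarrow> ('a, 's) elt \<Rightarrow> bool" where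
  "good A d = (case d of Base a \<Rightarrow> a \<in> A | Gen _ _ _ _ \<Rightarrow> True)"

lemma ract_1: "is_act A act \<Longrightarrow> good A d \<Longrightarrow> ract act d 1 = d"
  by (cases d) (auto simp: good_def is_act_def)

lemma ract_assoc: "is_act A act \<Longrightarrow> good A d \<Longrightarrow> ract act (ract act d s) t = ract act d (s * t)"
  by (cases d) (auto simp: good_def is_act_def mult.assoc)

lemma good_ract: "is_act A act \<Longrightarrow> good A d \<Longrightarrow> good A (ract act d s)"
  by (cases d) (auto simp: good_def is_act_def)

definition wfq :: "'a set \<Rightarrow> ('a \<Rightarrow> 's::monoid_mult \<Rightarrow> 'a) \<Rightarrow> ('a, 's) elt set \<Rightarrow> ('a, 's) elt rel \<Rightarrow> bool" where
  "wfq A act D E \<longleftrightarrow> E \<subseteq> D \<times> D \<and> (\<forall>d\<in>D. (d, d) \<in> E) \<and> sym E \<and> trans E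
     \<and> (\<forall>d\<in>D. \<forall>s. ract act d s \<in> D) \<and> (\<forall>x y s. (x, y) \<in> E \<longrightarrow> (ract act x s, ract act y s) \<in> E)
     \<and> (\<forall>d\<in>D. good A d)"

lemma wfq_equiv: "wfq A act D E \<Longrightarrow> equiv D E"
  unfolding wfq_def equiv_def refl_on_def by auto

lemma wfq_class_eq: "wfq A act D E \<Longrightarrow> (x, y) \<in> E \<Longrightarrow> E `` {x} = E `` {y}"
  using wfq_equiv equiv_class_eq by metis

lemma wfq_class_iff: "wfq A act D E \<Longrightarrow> x \<in> D \<Longrightarrow> y \<in> D \<Longrightarrow> E `` {x} = E `` {y} \<longleftrightarrow> (x, y) \<in> E"
  using wfq_equiv eq_equiv_class_iff by metis

lemma wfq_self: "wfq A act D E \<Longrightarrow> x \<in> D \<Longrightarrow> x \<in> E `` {x}"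
  unfolding wfq_def by auto

lemma qact_class:
  assumes w: "wfq A act D E" and d: "d \<in> D"
  shows "qact E (ract act) (E `` {d}) s = E `` {ract act d s}"
proof
  show "qact E (ract act) (E `` {d}) s \<subseteq> E `` {ract act d s}"
  proof
    fix z assume "z \<in> qact E (ract act) (E `` {d}) s"
    then obtain y where y: "(d, y) \<in> E" "(ract act y s, z) \<in> E" by (auto simp: qact_def)
    then have "(ract act d s, ract act y s) \<in> E" using w by (simp add: wfq_def)
    with y(2) have "(ract act d s, z) \<in> E" using w unfolding wfq_def trans_def by blast
    then show "z \<in> E `` {ract act d s}" by simp
  qed
next
  show "E `` {ract act d s} \<subseteq> qact E (ract act) (E `` {d}) s"
    using wfq_self[OF w d] by (auto simp: qact_def)
qed

lemma quot_act:
  assumes A: "is_act A act" and w: "wfq A act D E"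
  shows "is_act (D // E) (qact E (ract act))"
  unfolding is_act_def
proof (intro conjI ballI allI)
  fix c s assume "c \<in> D // E"
  then obtain d where d: "d \<in> D" "c = E `` {d}" by (auto elim: quotientE)
  then show "qact E (ract act) c s \<in> D // E"
    using qact_class[OF w d(1)] w by (auto simp: wfq_def intro: quotientI)
next
  fix c assume "c \<in> D // E"
  then obtain d where d: "d \<in> D" "c = E `` {d}" by (auto elim: quotientE)
  have "good A d" using w d by (simp add: wfq_def)
  then show "qact E (ract act) c 1 = c" using qact_class[OF w d(1)] d ract_1[OF A] by simp
next
  fix c s t assume "c \<in> D // E"
  then obtain d where d: "d \<in> D" "c = E `` {d}" by (auto elim: quotientE)
  have g: "good A d" using w d by (simp add: wfq_def)
  have "ract act d s \<in> D" using w d by (simp add: wfq_def)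
  then show "qact E (ract act) c (s * t) = qact E (ract act) (qact E (ract act) c s) t"
    using qact_class[OF w] d ract_assoc[OF A g] by simp
qed

lemma quot_rep:
  assumes w: "wfq A act D E" and c: "c \<in> D // E"
  shows "rep c \<in> c" "rep c \<in> D" "E `` {rep c} = c"
proof -
  obtain d where d: "d \<in> D" "c = E `` {d}" using c by (auto elim: quotientE)
  have "d \<in> c" using wfq_self[OF w d(1)] d by simp
  then show rc: "rep c \<in> c" unfolding rep_def by (rule someI)
  then show "rep c \<in> D" using w d by (auto simp: wfq_def)
  from rc d have "(d, rep c) \<in> E" by simp
  then show "E `` {rep c} = c" using wfq_class_eq[OF w] d by metis
qed

lemma vars_map: "(\<Union>e\<in>fset (fimage (eqn_map \<phi>) \<Sigma>). eqn_vars e) = (\<Union>e\<in>fset \<Sigma>. eqn_vars e)"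
proof -
  have h: "\<And>e. eqn_vars (eqn_map \<phi> e) = eqn_vars e" by (case_tac e) auto
  show ?thesis by (simp only: fimage.rep_eq image_image h)
qed

lemma nvars_map: "nvars (fimage (eqn_map \<phi>) \<Sigma>) = nvars \<Sigma>"
  unfolding nvars_def using vars_map by metis

lemma eqn_map_comp: "eqn_map f (eqn_map g e) = eqn_map (f \<circ> g) e"
  by (cases e) auto

lemma eqn_map_id: "(\<And>a. a \<in> eqn_consts e \<Longrightarrow> f a = a) \<Longrightarrow> eqn_map f e = e"
  by (cases e) auto

lemma over_map: "over X (fimage (eqn_map \<phi>) \<Sigma>) \<longleftrightarrow> (\<forall>e\<in>fset \<Sigma>. \<phi> ` eqn_consts e \<subseteq> X)"
proof -
  have h: "\<And>e. eqn_consts (eqn_map \<phi> e) = \<phi> ` eqn_consts e" by (case_tac e) auto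
  show ?thesis by (simp add: over_def h del: eqn_consts.simps)
qed

lemma mem_map_VV: "EqVV x s y t \<in> fset (fimage (eqn_map \<phi>) \<Sigma>) \<longleftrightarrow> EqVV x s y t \<in> fset \<Sigma>"
proof -
  have h: "\<And>e. EqVV x s y t = eqn_map \<phi> e \<longleftrightarrow> e = EqVV x s y t" by (case_tac e) auto
  show ?thesis by (simp add: fimage.rep_eq image_iff h)
qed

lemma mem_map_VC: "EqVC x s c \<in> fset (fimage (eqn_map \<phi>) \<Sigma>) \<longleftrightarrow> (\<exists>a. c = \<phi> a \<and> EqVC x s a \<in> fset \<Sigma>)"
proof -
  have h: "\<And>e. EqVC x s c = eqn_map \<phi> e \<longleftrightarrow> (\<exists>a. c = \<phi> a \<and> e = EqVC x s a)" by (case_tac e) auto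
  show ?thesis by (auto simp: fimage.rep_eq image_iff h)
qed

lemma solves_map: "solves actB F \<sigma> (fimage (eqn_map \<phi>) \<Sigma>) \<longleftrightarrow> solves actB (F \<circ> \<phi>) \<sigma> \<Sigma>"
  unfolding solves_def2 mem_map_VV mem_map_VC comp_def by blast

lemma solves_cong:
  assumes "\<forall>e\<in>fset \<Sigma>. \<forall>a\<in>eqn_consts e. F a = F' a"
  shows "solves actB F \<sigma> \<Sigma> \<longleftrightarrow> solves actB F' \<sigma> \<Sigma>"
proof -
  have "\<And>e. e \<in> fset \<Sigma> \<Longrightarrow> (case e of EqVV x s y t \<Rightarrow> actB (\<sigma> x) s = actB (\<sigma> y) t
       | EqVC x s a \<Rightarrow> actB (\<sigma> x) s = F a) = (case e of EqVV x s y t \<Rightarrow> actB (\<sigma> x) s = actB (\<sigma> y) t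
       | EqVC x s a \<Rightarrow> actB (\<sigma> x) s = F' a)"
    subgoal for e using assms by (cases e) auto done
  note h = this
  show ?thesis unfolding solves_def by (simp add: h del: eqn.case)
qed

lemma solves_morph:
  assumes g: "is_morph Y aY X aX g" and sig: "\<forall>k\<in>(\<Union>e\<in>fset \<Sigma>. eqn_vars e). \<sigma> k \<in> Y"
    and sol: "solves aY F \<sigma> \<Sigma>"
  shows "solves aX (g \<circ> F) (g \<circ> \<sigma>) \<Sigma>"
  unfolding solves_def2
proof (intro conjI allI impI)
  fix x s y t assume e: "EqVV x s y t \<in> fset \<Sigma>"
  then have "\<sigma> x \<in> Y" "\<sigma> y \<in> Y" using sig by auto
  then have "aX ((g \<circ> \<sigma>) x) s = g (aY (\<sigma> x) s)" "aX ((g \<circ> \<sigma>) y) t = g (aY (\<sigma> y) t)"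
    using g by (auto simp: is_morph_def)
  moreover have "aY (\<sigma> x) s = aY (\<sigma> y) t" using sol e by (simp add: solves_def2)
  ultimately show "aX ((g \<circ> \<sigma>) x) s = aX ((g \<circ> \<sigma>) y) t" by simp
next
  fix x s a assume e: "EqVC x s a \<in> fset \<Sigma>"
  then have "\<sigma> x \<in> Y" using sig by auto
  then have "aX ((g \<circ> \<sigma>) x) s = g (aY (\<sigma> x) s)"
    using g by (auto simp: is_morph_def)
  moreover have "aY (\<sigma> x) s = F a" using sol e by (simp add: solves_def2)
  ultimately show "aX ((g \<circ> \<sigma>) x) s = (g \<circ> F) a" by simp
qed




locale ext =
  fixes P :: "nat \<Rightarrow> bool" and A :: "'a set" and act :: "'a \<Rightarrow> 's::monoid_mult \<Rightarrow> 'a"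
  assumes A: "is_act A act"
begin

definition "D i = fst (stage P A act i)"
definition "E i = snd (stage P A act i)"
abbreviation "Cq i \<equiv> D i // E i"
abbreviation "qa i \<equiv> qact (E i) (ract act)"
definition "Th i = {\<Sigma>. over (Cq i) \<Sigma> \<and> consistent (Cq i) (qa i) \<Sigma> \<and> P (nvars \<Sigma>)}"
definition "N i = {Gen (Suc i) (tag \<Sigma>) k s | \<Sigma> k s. \<Sigma> \<in> Th i \<and> k \<in> (\<Union>e\<in>fset \<Sigma>. eqn_vars e)}"
definition "H i = {(Gen (Suc i) (tag \<Sigma>) x u, Gen (Suc i) (tag \<Sigma>) y v) | \<Sigma> x u y v.
                \<Sigma> \<in> Th i \<and> EqVV x u y v \<in> fset \<Sigma>}"
definition "K i = {(Gen (Suc i) (tag \<Sigma>) x s, rep a) | \<Sigma> x s a. \<Sigma> \<in> Th i \<and> EqVC x s a \<in> fset \<Sigma>}"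
definition "untag i T = fimage (eqn_map (\<lambda>d. E i `` {d})) T"

lemma D0: "D 0 = Base ` A" and E0: "E 0 = Id_on (Base ` A)"
  by (simp_all add: D_def E_def)

lemma DS: "D (Suc i) = D i \<union> N i"
  and ES: "E (Suc i) = congr (D i \<union> N i) (ract act) (E i \<union> H i \<union> K i)"
  by (simp_all add: D_def E_def Th_def N_def H_def K_def Let_def)

definition inv :: "nat \<Rightarrow> bool" where
  "inv i \<longleftrightarrow> wfq A act (D i) (E i) \<and> (\<forall>d\<in>D i. case d of Base _ \<Rightarrow> True | Gen j _ _ _ \<Rightarrow> j \<le> i)"

lemma inv0: "inv 0"
  using A unfolding inv_def wfq_def D0 E0
  by (auto simp: good_def sym_def trans_def is_act_def)

lemma over_const: "over X \<Sigma> \<Longrightarrow> EqVC x s a \<in> fset \<Sigma> \<Longrightarrow> a \<in> X"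
  unfolding over_def by fastforce

lemma untag_tag:
  assumes w: "wfq A act (D i) (E i)" and ov: "over (Cq i) \<Sigma>"
  shows "untag i (tag \<Sigma>) = \<Sigma>"
proof -
  have "untag i (tag \<Sigma>) = fimage (eqn_map (\<lambda>d. E i `` {d}) \<circ> eqn_map rep) \<Sigma>"
    by (simp add: untag_def tag_def fimage_fimage comp_def)
  also have "\<dots> = fimage (\<lambda>x. x) \<Sigma>"
  proof (rule fimage_cong[OF HOL.refl])
    fix e assume e: "e \<in> fset \<Sigma>"
    have "\<And>a. a \<in> eqn_consts e \<Longrightarrow> ((\<lambda>d. E i `` {d}) \<circ> rep) a = a"
      using quot_rep(3)[OF w] ov e unfolding over_def by auto
    then show "(eqn_map (\<lambda>d. E i `` {d}) \<circ> eqn_map rep) e = e"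
      by (simp add: eqn_map_comp eqn_map_id)
  qed
  finally show ?thesis by simp
qed

lemma NE:
  assumes "x \<in> N i"
  obtains \<Sigma> k s where "x = Gen (Suc i) (tag \<Sigma>) k s" "\<Sigma> \<in> Th i" "k \<in> (\<Union>e\<in>fset \<Sigma>. eqn_vars e)"
  using assms unfolding N_def by blast

lemma N_ract: "x \<in> N i \<Longrightarrow> ract act x s \<in> N i"
  unfolding N_def by fastforce

lemma N_notD: "inv i \<Longrightarrow> x \<in> N i \<Longrightarrow> x \<notin> D i"
  by (force simp: N_def inv_def)

lemma step:
  assumes iv: "inv i"
  shows "inv (Suc i)" and "\<And>x y. x \<in> D i \<Longrightarrow> y \<in> D i \<Longrightarrow> (x, y) \<in> E (Suc i) \<Longrightarrow> (x, y) \<in> E i"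
proof -
  have w: "wfq A act (D i) (E i)" using iv by (simp add: inv_def)
  let ?D = "D i \<union> N i" and ?R = "E i \<union> H i \<union> K i"
  have cl: "\<forall>x\<in>?D. \<forall>s. ract act x s \<in> ?D" using w N_ract by (auto simp: wfq_def)
  have R: "?R \<subseteq> ?D \<times> ?D"
  proof -
    have "E i \<subseteq> ?D \<times> ?D" using w by (auto simp: wfq_def)
    moreover have "H i \<subseteq> ?D \<times> ?D" by (force simp: H_def N_def)
    moreover have "K i \<subseteq> ?D \<times> ?D"
    proof
      fix p assume "p \<in> K i"
      then obtain \<Sigma> x s a where p: "p = (Gen (Suc i) (tag \<Sigma>) x s, rep a)" "\<Sigma> \<in> Th i" "EqVC x s a \<in> fset \<Sigma>"
        by (auto simp: K_def)
      then have "a \<in> Cq i" using over_const by (auto simp: Th_def)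
      then have "rep a \<in> D i" using quot_rep[OF w] by blast
      moreover have "Gen (Suc i) (tag \<Sigma>) x s \<in> N i" using p by (force simp: N_def)
      ultimately show "p \<in> ?D \<times> ?D" using p by auto
    qed
    ultimately show ?thesis by blast
  qed
  have sub: "\<And>x y. (x, y) \<in> E (Suc i) \<Longrightarrow> x \<in> ?D \<and> y \<in> ?D"
    using congr_sub[OF R cl] by (simp add: ES)
  show "inv (Suc i)"
    unfolding inv_def wfq_def DS
  proof (intro conjI)
    show "E (Suc i) \<subseteq> ?D \<times> ?D" using sub by auto
    show "\<forall>d\<in>?D. (d, d) \<in> E (Suc i)" by (simp add: ES congr.refl)
    show "sym (E (Suc i))" unfolding sym_def ES by (blast intro: congr.sym)
    show "trans (E (Suc i))" unfolding trans_def ES by (blast intro: congr.trans)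
    show "\<forall>d\<in>?D. \<forall>s. ract act d s \<in> ?D" by (rule cl)
    show "\<forall>x y s. (x, y) \<in> E (Suc i) \<longrightarrow> (ract act x s, ract act y s) \<in> E (Suc i)"
      unfolding ES by (blast intro: congr.compat)
    show "\<forall>d\<in>?D. good A d" using w by (auto simp: wfq_def N_def good_def)
    show "\<forall>d\<in>?D. case d of Base x \<Rightarrow> True | Gen j x xa xb \<Rightarrow> j \<le> Suc i"
    proof
      fix d assume "d \<in> ?D"
      then show "case d of Base x \<Rightarrow> True | Gen j x xa xb \<Rightarrow> j \<le> Suc i"
      proof
        assume "d \<in> D i"
        then have "case d of Base x \<Rightarrow> True | Gen j x xa xb \<Rightarrow> j \<le> i" using iv by (simp add: inv_def)
        then show ?thesis by (cases d) auto
      next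
        assume "d \<in> N i" then show ?thesis by (auto simp: N_def)
      qed
    qed
  qed
  have "\<forall>\<Sigma>\<in>Th i. \<exists>(B :: (('a, 's) elt set + nat \<times> 's) set) aB f \<sigma>. is_act B aB \<and> is_morph (Cq i) (qa i) B aB f
      \<and> inj_on f (Cq i) \<and> (\<forall>k\<in>(\<Union>e\<in>fset \<Sigma>. eqn_vars e). \<sigma> k \<in> B) \<and> solves aB f \<sigma> \<Sigma>"
    by (simp add: Th_def consistent_def)
  then obtain Bw :: "_ \<Rightarrow> (('a, 's) elt set + nat \<times> 's) set" and aBw fw \<sigma>w where
    W: "\<forall>\<Sigma>\<in>Th i. is_act (Bw \<Sigma>) (aBw \<Sigma>) \<and> is_morph (Cq i) (qa i) (Bw \<Sigma>) (aBw \<Sigma>) (fw \<Sigma>)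
      \<and> inj_on (fw \<Sigma>) (Cq i) \<and> (\<forall>k\<in>(\<Union>e\<in>fset \<Sigma>. eqn_vars e). \<sigma>w \<Sigma> k \<in> Bw \<Sigma>) \<and> solves (aBw \<Sigma>) (fw \<Sigma>) (\<sigma>w \<Sigma>) \<Sigma>"
    by metis
  have Wd: "\<And>\<Sigma>. \<Sigma> \<in> Th i \<Longrightarrow> is_act (Bw \<Sigma>) (aBw \<Sigma>) \<and> is_morph (Cq i) (qa i) (Bw \<Sigma>) (aBw \<Sigma>) (fw \<Sigma>)
      \<and> inj_on (fw \<Sigma>) (Cq i) \<and> (\<forall>k\<in>(\<Union>e\<in>fset \<Sigma>. eqn_vars e). \<sigma>w \<Sigma> k \<in> Bw \<Sigma>) \<and> solves (aBw \<Sigma>) (fw \<Sigma>) (\<sigma>w \<Sigma>) \<Sigma>"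
    using W by blast
  have qact: "is_act (Cq i) (qa i)" using quot_act[OF A w] .
  have idm: "is_morph (Cq i) (qa i) (Cq i) (qa i) id" using qact by (simp add: is_morph_def is_act_def)
  interpret am: amal "Cq i" "qa i" "Cq i" "qa i" id "Th i" Bw aBw fw
    by unfold_locales (use qact idm Wd in auto)
  define h where "h d = (if d \<in> D i then Inl (E i `` {d}) else (case d of
      Gen j T k s \<Rightarrow> amal_emb (Cq i) id fw (untag i T) (aBw (untag i T) (\<sigma>w (untag i T) k) s)
    | Base a \<Rightarrow> undefined))" for d
  have hD: "\<And>d. d \<in> D i \<Longrightarrow> h d = Inl (E i `` {d})" by (simp add: h_def)
  have hN: "\<And>\<Sigma> k s. \<Sigma> \<in> Th i \<Longrightarrow> k \<in> (\<Union>e\<in>fset \<Sigma>. eqn_vars e) \<Longrightarrow>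
      h (Gen (Suc i) (tag \<Sigma>) k s) = amal_emb (Cq i) id fw \<Sigma> (aBw \<Sigma> (\<sigma>w \<Sigma> k) s)"
  proof -
    fix \<Sigma> k s assume th: "\<Sigma> \<in> Th i" and k: "k \<in> (\<Union>e\<in>fset \<Sigma>. eqn_vars e)"
    then have "Gen (Suc i) (tag \<Sigma>) k s \<in> N i" by (force simp: N_def)
    then have "Gen (Suc i) (tag \<Sigma>) k s \<notin> D i" using N_notD[OF iv] by blast
    moreover have "untag i (tag \<Sigma>) = \<Sigma>" using untag_tag[OF w] th unfolding Th_def by blast
    ultimately show "h (Gen (Suc i) (tag \<Sigma>) k s) = amal_emb (Cq i) id fw \<Sigma> (aBw \<Sigma> (\<sigma>w \<Sigma> k) s)"
      by (simp add: h_def)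
  qed
  have hm: "\<forall>x\<in>?D. \<forall>s. h (ract act x s) = amal_act (Cq i) id fw (qa i) aBw (h x) s"
  proof (intro ballI allI)
    fix x s assume "x \<in> ?D"
    then show "h (ract act x s) = amal_act (Cq i) id fw (qa i) aBw (h x) s"
    proof
      assume x: "x \<in> D i"
      then have "ract act x s \<in> D i" using w by (simp add: wfq_def)
      then show ?thesis using x by (simp add: hD amal_act_def qact_class[OF w])
    next
      assume "x \<in> N i"
      then obtain \<Sigma> k u where x: "x = Gen (Suc i) (tag \<Sigma>) k u" "\<Sigma> \<in> Th i" "k \<in> (\<Union>e\<in>fset \<Sigma>. eqn_vars e)"
        by (rule NE)
      have sk: "\<sigma>w \<Sigma> k \<in> Bw \<Sigma>" using Wd[OF x(2)] x(3) by blast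
      have ab: "is_act (Bw \<Sigma>) (aBw \<Sigma>)" using Wd[OF x(2)] by blast
      have "h (ract act x s) = amal_emb (Cq i) id fw \<Sigma> (aBw \<Sigma> (\<sigma>w \<Sigma> k) (u * s))"
        using hN[OF x(2,3)] x(1) by simp
      also have "\<dots> = amal_emb (Cq i) id fw \<Sigma> (aBw \<Sigma> (aBw \<Sigma> (\<sigma>w \<Sigma> k) u) s)"
        using ab sk by (simp add: is_actD)
      also have "\<dots> = amal_act (Cq i) id fw (qa i) aBw (amal_emb (Cq i) id fw \<Sigma> (aBw \<Sigma> (\<sigma>w \<Sigma> k) u)) s"
        using am.emb_act[OF x(2), of "aBw \<Sigma> (\<sigma>w \<Sigma> k) u" s] ab sk by (simp add: is_actD)
      also have "\<dots> = amal_act (Cq i) id fw (qa i) aBw (h x) s" using hN[OF x(2,3)] x(1) by simp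
      finally show ?thesis .
    qed
  qed
  have hR: "\<forall>(x, y)\<in>?R. h x = h y"
  proof (clarify)
    fix x y assume xy: "(x, y) \<in> ?R"
    show "h x = h y"
    proof (cases "(x, y) \<in> E i")
      case True
      then have "x \<in> D i" "y \<in> D i" using w by (auto simp: wfq_def)
      then show ?thesis using True wfq_class_eq[OF w True] by (simp add: hD)
    next
      case F1: False
      show ?thesis
      proof (cases "(x, y) \<in> H i")
        case True
        then obtain \<Sigma> a u b v where p: "x = Gen (Suc i) (tag \<Sigma>) a u" "y = Gen (Suc i) (tag \<Sigma>) b v"
          "\<Sigma> \<in> Th i" "EqVV a u b v \<in> fset \<Sigma>" by (auto simp: H_def)
        have "a \<in> (\<Union>e\<in>fset \<Sigma>. eqn_vars e)" "b \<in> (\<Union>e\<in>fset \<Sigma>. eqn_vars e)" using p(4) by force+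
        moreover have "aBw \<Sigma> (\<sigma>w \<Sigma> a) u = aBw \<Sigma> (\<sigma>w \<Sigma> b) v"
          using Wd[OF p(3)] p(4) by (simp add: solves_def2)
        ultimately show ?thesis using hN[OF p(3)] p(1,2) by simp
      next
        case False
        with F1 xy have "(x, y) \<in> K i" by blast
        then obtain \<Sigma> a s c where p: "x = Gen (Suc i) (tag \<Sigma>) a s" "y = rep c"
          "\<Sigma> \<in> Th i" "EqVC a s c \<in> fset \<Sigma>" by (auto simp: K_def)
        have a: "a \<in> (\<Union>e\<in>fset \<Sigma>. eqn_vars e)" using p(4) by force
        have c: "c \<in> Cq i" using p(3,4) over_const by (auto simp: Th_def)
        have "aBw \<Sigma> (\<sigma>w \<Sigma> a) s = fw \<Sigma> c"
          using Wd[OF p(3)] p(4) by (simp add: solves_def2)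
        then have "h x = Inl c" using hN[OF p(3) a] p(1) am.emb_f[OF p(3) c] by simp
        moreover have "h y = Inl c" using p(2) quot_rep[OF w c] by (simp add: hD)
        ultimately show ?thesis by simp
      qed
    qed
  qed
  fix x y assume x: "x \<in> D i" and y: "y \<in> D i" and xy: "(x, y) \<in> E (Suc i)"
  have "h x = h y" using congr_kernel[OF R cl hm hR] xy by (simp add: ES)
  then have "E i `` {x} = E i `` {y}" using x y by (simp add: hD)
  then show "(x, y) \<in> E i" using wfq_class_iff[OF w x y] by simp
qed

end




definition ppure :: "(nat \<Rightarrow> bool) \<Rightarrow> 'c set \<Rightarrow> ('c \<Rightarrow> 's::monoid_mult \<Rightarrow> 'c) \<Rightarrow> bool" where
  "ppure P X act \<longleftrightarrow> (\<forall>\<Sigma>. over X \<Sigma> \<and> P (nvars \<Sigma>) \<and> consistent X act \<Sigma>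
       \<longrightarrow> (\<exists>\<sigma>. (\<forall>k\<in>(\<Union>e\<in>fset \<Sigma>. eqn_vars e). \<sigma> k \<in> X) \<and> solves act id \<sigma> \<Sigma>))"

context ext begin

lemma inv_all: "inv i"
  by (induction i) (use inv0 step(1) in auto)

lemma wf_i: "wfq A act (D i) (E i)"
  using inv_all by (simp add: inv_def)

lemma D_mono: "i \<le> j \<Longrightarrow> D i \<subseteq> D j"
proof (induction j)
  case (Suc j) then show ?case by (cases "i = Suc j") (auto simp: DS)
qed simp

lemma E_mono: "i \<le> j \<Longrightarrow> E i \<subseteq> E j"
proof (induction j)
  case (Suc j)
  have "E j \<subseteq> E (Suc j)" by (auto simp: ES intro: congr.gen)
  with Suc show ?case by (cases "i = Suc j") auto
qed simp

lemma E_restrict: "i \<le> j \<Longrightarrow> x \<in> D i \<Longrightarrow> y \<in> D i \<Longrightarrow> (x, y) \<in> E j \<Longrightarrow> (x, y) \<in> E i"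
proof (induction j)
  case (Suc j)
  show ?case
  proof (cases "i = Suc j")
    case False
    then have ij: "i \<le> j" using Suc by simp
    then have "x \<in> D j" "y \<in> D j" using D_mono Suc by auto
    then have "(x, y) \<in> E j" using step(2)[OF inv_all] Suc by blast
    then show ?thesis using Suc ij by blast
  qed (use Suc in simp)
qed simp

abbreviation "UD \<equiv> (\<Union>i. D i)"
abbreviation "ER \<equiv> ext_rel P A act"

lemma ER_def': "ER = (\<Union>i. E i)" by (simp add: ext_rel_def E_def)
lemma UD_def': "(\<Union>i. fst (stage P A act i)) = UD" by (simp add: D_def)

lemma ER_restrict: "x \<in> D i \<Longrightarrow> y \<in> D i \<Longrightarrow> (x, y) \<in> ER \<Longrightarrow> (x, y) \<in> E i"
proof -
  assume x: "x \<in> D i" and y: "y \<in> D i" and "(x, y) \<in> ER"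
  then obtain j where j: "(x, y) \<in> E j" by (auto simp: ER_def')
  show ?thesis
  proof (cases "i \<le> j")
    case True then show ?thesis using E_restrict x y j by blast
  next
    case False then show ?thesis using E_mono[of j i] j by auto
  qed
qed

lemma E_ER: "E i \<subseteq> ER" by (auto simp: ER_def')

lemma wf_UD: "wfq A act UD ER"
  unfolding wfq_def
proof (intro conjI)
  show "ER \<subseteq> UD \<times> UD"
  proof
    fix p assume "p \<in> ER"
    then obtain i where "p \<in> E i" by (auto simp: ER_def')
    then have "p \<in> D i \<times> D i" using wf_i[of i] unfolding wfq_def by blast
    then show "p \<in> UD \<times> UD" by blast
  qed
  show "\<forall>d\<in>UD. (d, d) \<in> ER"
  proof
    fix d assume "d \<in> UD"
    then obtain i where "d \<in> D i" by blast
    then have "(d, d) \<in> E i" using wf_i[of i] unfolding wfq_def by blast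
    then show "(d, d) \<in> ER" by (auto simp: ER_def')
  qed
  show "sym ER" unfolding sym_def
  proof (intro allI impI)
    fix x y assume "(x, y) \<in> ER"
    then obtain i where "(x, y) \<in> E i" by (auto simp: ER_def')
    then have "(y, x) \<in> E i" using wf_i[of i] unfolding wfq_def sym_def by blast
    then show "(y, x) \<in> ER" by (auto simp: ER_def')
  qed
  show "trans ER" unfolding trans_def
  proof (intro allI impI)
    fix x y z assume "(x, y) \<in> ER" "(y, z) \<in> ER"
    then obtain i j where "(x, y) \<in> E i" "(y, z) \<in> E j" by (auto simp: ER_def')
    then have "(x, y) \<in> E (max i j)" "(y, z) \<in> E (max i j)" using E_mono by (meson max.cobounded1 max.cobounded2 subsetD)+
    then have "(x, z) \<in> E (max i j)" using wf_i[of "max i j"] unfolding wfq_def trans_def by blast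
    then show "(x, z) \<in> ER" by (auto simp: ER_def')
  qed
  show "\<forall>d\<in>UD. \<forall>s. ract act d s \<in> UD"
  proof (intro ballI allI)
    fix d s assume "d \<in> UD"
    then obtain i where "d \<in> D i" by blast
    then have "ract act d s \<in> D i" using wf_i[of i] unfolding wfq_def by blast
    then show "ract act d s \<in> UD" by blast
  qed
  show "\<forall>x y s. (x, y) \<in> ER \<longrightarrow> (ract act x s, ract act y s) \<in> ER"
  proof (intro allI impI)
    fix x y s assume "(x, y) \<in> ER"
    then obtain i where "(x, y) \<in> E i" by (auto simp: ER_def')
    then have "(ract act x s, ract act y s) \<in> E i" using wf_i[of i] unfolding wfq_def by blast
    then show "(ract act x s, ract act y s) \<in> ER" by (auto simp: ER_def')
  qed
  show "\<forall>d\<in>UD. good A d"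
  proof
    fix d assume "d \<in> UD"
    then obtain i where "d \<in> D i" by blast
    then show "good A d" using wf_i[of i] unfolding wfq_def by blast
  qed
qed

lemma carrier_eq: "ext_carrier P A act = UD // ER"
  by (simp add: ext_carrier_def UD_def')

lemma act_eq: "ext_act P A act = qact ER (ract act)"
  by (simp add: ext_act_def)

lemma ext_is_act: "is_act (ext_carrier P A act) (ext_act P A act)"
  using quot_act[OF A wf_UD] by (simp add: carrier_eq act_eq)

lemma finite_in_stage: "finite F \<Longrightarrow> F \<subseteq> UD \<Longrightarrow> \<exists>m. F \<subseteq> D m"
proof (induction F rule: finite_induct)
  case (insert x F)
  then obtain m where m: "F \<subseteq> D m" by auto
  obtain j where j: "x \<in> D j" using insert by auto
  have "F \<subseteq> D (max m j)" "x \<in> D (max m j)" using m j D_mono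
    by (meson max.cobounded1 max.cobounded2 subset_trans subsetD)+
  then show ?case by blast
qed simp

lemma ER_class: "d \<in> D i \<Longrightarrow> ER `` (E i `` {d}) = ER `` {d}"
proof -
  assume d: "d \<in> D i"
  have "\<And>y. (d, y) \<in> E i \<Longrightarrow> ER `` {y} = ER `` {d}"
    using wfq_class_eq[OF wf_UD] E_ER by blast
  moreover have "(d, d) \<in> E i" using wf_i d by (simp add: wfq_def)
  ultimately show ?thesis by blast
qed

lemma ext_emb_eq: "ext_emb P A act a = ER `` {Base a}"
  by (simp add: ext_emb_def)

lemma emb_morph: "is_morph A act (ext_carrier P A act) (ext_act P A act) (ext_emb P A act)"
  unfolding is_morph_def
proof (intro conjI ballI allI)
  fix a assume a: "a \<in> A"
  then have "Base a \<in> UD" using D0 by auto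
  then show "ext_emb P A act a \<in> ext_carrier P A act" by (simp add: ext_emb_eq carrier_eq quotientI)
  fix s
  show "ext_emb P A act (act a s) = ext_act P A act (ext_emb P A act a) s"
    using qact_class[OF wf_UD \<open>Base a \<in> UD\<close>] by (simp add: ext_emb_eq act_eq)
qed

lemma emb_inj: "inj_on (ext_emb P A act) A"
proof (rule inj_onI)
  fix a b assume a: "a \<in> A" and b: "b \<in> A" and e: "ext_emb P A act a = ext_emb P A act b"
  have "Base a \<in> D 0" "Base b \<in> D 0" using a b D0 by auto
  moreover then have "(Base a, Base b) \<in> ER" using e wfq_class_iff[OF wf_UD] by (auto simp: ext_emb_eq)
  ultimately have "(Base a, Base b) \<in> E 0" using ER_restrict by blast
  then show "a = b" by (auto simp: E0 Id_on_def)
qed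

end




lemma finite_consts: "finite (eqn_consts e)" by (cases e) auto

context ext begin

lemma H_E: "H i \<subseteq> E (Suc i)" and K_E: "K i \<subseteq> E (Suc i)" and N_D: "N i \<subseteq> D (Suc i)"
  by (auto simp: ES DS intro: congr.gen)

theorem ext_pure: "ppure P (ext_carrier P A act) (ext_act P A act)"
  unfolding ppure_def
proof (intro allI impI, elim conjE)
  fix \<Sigma> :: "(('a, 's) elt set, 's) eqn fset"
  assume ov: "over (ext_carrier P A act) \<Sigma>" and Pn: "P (nvars \<Sigma>)"
    and co: "consistent (ext_carrier P A act) (ext_act P A act) \<Sigma>"
  define Ks where "Ks = (\<Union>e\<in>fset \<Sigma>. eqn_consts e)"
  have fK: "finite Ks" unfolding Ks_def by (simp add: finite_consts)
  have KX: "\<And>X. X \<in> Ks \<Longrightarrow> X \<in> UD // ER" using ov carrier_eq by (auto simp: Ks_def over_def)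
  define rp where "rp X = (SOME d. d \<in> UD \<and> X = ER `` {d})" for X
  have rp: "\<And>X. X \<in> Ks \<Longrightarrow> rp X \<in> UD \<and> X = ER `` {rp X}"
  proof -
    fix X assume "X \<in> Ks"
    then have "X \<in> UD // ER" by (rule KX)
    then have "\<exists>d. d \<in> UD \<and> X = ER `` {d}" by (elim quotientE) blast
    then show "rp X \<in> UD \<and> X = ER `` {rp X}" unfolding rp_def by (rule someI_ex)
  qed
  obtain m where m: "rp ` Ks \<subseteq> D m" using finite_in_stage[of "rp ` Ks"] fK rp by blast
  define \<phi> where "\<phi> X = E m `` {rp X}" for X
  have \<phi>C: "\<And>X. X \<in> Ks \<Longrightarrow> \<phi> X \<in> Cq m" using m by (auto simp: \<phi>_def intro: quotientI)
  have \<phi>back: "\<And>X. X \<in> Ks \<Longrightarrow> ER `` (\<phi> X) = X"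
  proof -
    fix X assume X: "X \<in> Ks"
    then have "rp X \<in> D m" using m by blast
    then have "ER `` (\<phi> X) = ER `` {rp X}" unfolding \<phi>_def by (rule ER_class)
    then show "ER `` (\<phi> X) = X" using rp[OF X] by simp
  qed
  define \<Sigma>' where "\<Sigma>' = fimage (eqn_map \<phi>) \<Sigma>"
  have ov': "over (Cq m) \<Sigma>'" unfolding \<Sigma>'_def over_map using \<phi>C by (auto simp: Ks_def)
  have Pn': "P (nvars \<Sigma>')" using Pn by (simp add: \<Sigma>'_def nvars_map)
  have vars': "(\<Union>e\<in>fset \<Sigma>'. eqn_vars e) = (\<Union>e\<in>fset \<Sigma>. eqn_vars e)" unfolding \<Sigma>'_def by (rule vars_map)
  obtain B :: "(('a, 's) elt set + nat \<times> 's) set" and aB f \<sigma> where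
    B: "is_act B aB" "is_morph (ext_carrier P A act) (ext_act P A act) B aB f" "inj_on f (ext_carrier P A act)"
      "\<forall>k\<in>(\<Union>e\<in>fset \<Sigma>. eqn_vars e). \<sigma> k \<in> B" "solves aB f \<sigma> \<Sigma>"
    using co by (rule consistentE)
  define jm where "jm c = ER `` c" for c :: "('a, 's) elt set"
  have jmC: "\<And>d. d \<in> D m \<Longrightarrow> jm (E m `` {d}) = ER `` {d}" by (simp add: jm_def ER_class)
  have jm_in: "\<And>c. c \<in> Cq m \<Longrightarrow> jm c \<in> ext_carrier P A act"
  proof -
    fix c assume "c \<in> Cq m"
    then obtain d where d: "d \<in> D m" "c = E m `` {d}" by (auto elim: quotientE)
    then have "d \<in> UD" by blast
    then show "jm c \<in> ext_carrier P A act" using jmC d by (simp add: carrier_eq quotientI)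
  qed
  have jm_m: "is_morph (Cq m) (qa m) B aB (f \<circ> jm)"
    unfolding is_morph_def
  proof (intro conjI ballI allI)
    fix c assume "c \<in> Cq m"
    then show "(f \<circ> jm) c \<in> B" using jm_in B(2) by (simp add: is_morph_def)
  next
    fix c s assume c: "c \<in> Cq m"
    then obtain d where d: "d \<in> D m" "c = E m `` {d}" by (auto elim: quotientE)
    then have dU: "d \<in> UD" by blast
    have rd: "ract act d s \<in> D m" using wf_i d by (simp add: wfq_def)
    have "jm (qa m c s) = ER `` {ract act d s}" using d rd by (simp add: qact_class[OF wf_i] jmC)
    also have "\<dots> = ext_act P A act (jm c) s" using d jmC qact_class[OF wf_UD dU] by (simp add: act_eq)
    finally show "(f \<circ> jm) (qa m c s) = aB ((f \<circ> jm) c) s"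
      using B(2) jm_in[OF c] by (simp add: is_morph_def)
  qed
  have jm_i: "inj_on (f \<circ> jm) (Cq m)"
  proof (rule inj_onI)
    fix c c' assume c: "c \<in> Cq m" and c': "c' \<in> Cq m" and e: "(f \<circ> jm) c = (f \<circ> jm) c'"
    then have "jm c = jm c'" using B(3) jm_in by (auto simp: inj_on_def)
    obtain d where d: "d \<in> D m" "c = E m `` {d}" using c by (auto elim: quotientE)
    obtain d' where d': "d' \<in> D m" "c' = E m `` {d'}" using c' by (auto elim: quotientE)
    have "ER `` {d} = ER `` {d'}" using \<open>jm c = jm c'\<close> d d' jmC by simp
    then have "(d, d') \<in> ER" using wfq_class_iff[OF wf_UD] d d' by blast
    then have "(d, d') \<in> E m" using ER_restrict d d' by blast
    then show "c = c'" using d d' wfq_class_eq[OF wf_i] by simp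
  qed
  have so': "solves aB (f \<circ> jm) \<sigma> \<Sigma>'"
    unfolding \<Sigma>'_def solves_map
  proof -
    have "\<forall>e\<in>fset \<Sigma>. \<forall>a\<in>eqn_consts e. (f \<circ> jm \<circ> \<phi>) a = f a"
    proof (intro ballI)
      fix e a assume "e \<in> fset \<Sigma>" "a \<in> eqn_consts e"
      then have "a \<in> Ks" by (auto simp: Ks_def)
      then show "(f \<circ> jm \<circ> \<phi>) a = f a" using \<phi>back by (simp add: jm_def)
    qed
    then show "solves aB (f \<circ> jm \<circ> \<phi>) \<sigma> \<Sigma>" by (rule iffD2[OF solves_cong B(5)])
  qed
  have cons': "consistent (Cq m) (qa m) \<Sigma>'"
    unfolding consistent_def
    apply (rule exI[where x=B], rule exI[where x=aB], rule exI[where x="f \<circ> jm"], rule exI[where x=\<sigma>])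
    apply (intro conjI)
        apply (rule B(1))
       apply (rule jm_m)
      apply (rule jm_i)
     apply (unfold vars')
     apply (rule B(4))
    apply (rule so')
    done
  have th: "\<Sigma>' \<in> Th m"
    apply (unfold Th_def)
    apply (rule CollectI)
    apply (intro conjI)
      apply (rule ov')
     apply (rule cons')
    apply (rule Pn')
    done
  define \<tau> where "\<tau> k = ER `` {Gen (Suc m) (tag \<Sigma>') k 1}" for k
  have GD: "\<And>k s. k \<in> (\<Union>e\<in>fset \<Sigma>. eqn_vars e) \<Longrightarrow> Gen (Suc m) (tag \<Sigma>') k s \<in> UD"
  proof -
    fix k s assume "k \<in> (\<Union>e\<in>fset \<Sigma>. eqn_vars e)"
    then have k': "k \<in> (\<Union>e\<in>fset \<Sigma>'. eqn_vars e)" using vars' by simp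
    have "Gen (Suc m) (tag \<Sigma>') k s \<in> N m"
      apply (unfold N_def, rule CollectI)
      apply (rule exI[where x="\<Sigma>'"], rule exI[where x=k], rule exI[where x=s])
      using th k' by simp
    then show "Gen (Suc m) (tag \<Sigma>') k s \<in> UD" using N_D by blast
  qed
  have tact: "\<And>k s. k \<in> (\<Union>e\<in>fset \<Sigma>. eqn_vars e) \<Longrightarrow>
       ext_act P A act (\<tau> k) s = ER `` {Gen (Suc m) (tag \<Sigma>') k s}"
    using qact_class[OF wf_UD GD] by (simp add: \<tau>_def act_eq)
  show "\<exists>\<tau>. (\<forall>k\<in>(\<Union>e\<in>fset \<Sigma>. eqn_vars e). \<tau> k \<in> ext_carrier P A act) \<and> solves (ext_act P A act) id \<tau> \<Sigma>"
  proof (intro exI conjI)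
    show "\<forall>k\<in>(\<Union>e\<in>fset \<Sigma>. eqn_vars e). \<tau> k \<in> ext_carrier P A act"
    proof
      fix k assume "k \<in> (\<Union>e\<in>fset \<Sigma>. eqn_vars e)"
      then have "Gen (Suc m) (tag \<Sigma>') k 1 \<in> UD" by (rule GD)
      then show "\<tau> k \<in> ext_carrier P A act" unfolding \<tau>_def carrier_eq by (rule quotientI)
    qed
    show "solves (ext_act P A act) id \<tau> \<Sigma>"
      unfolding solves_def2
    proof (intro conjI allI impI)
      fix x u y v assume e: "EqVV x u y v \<in> fset \<Sigma>"
      then have xy: "x \<in> (\<Union>e\<in>fset \<Sigma>. eqn_vars e)" "y \<in> (\<Union>e\<in>fset \<Sigma>. eqn_vars e)" by force+
      have e': "EqVV x u y v \<in> fset \<Sigma>'" unfolding \<Sigma>'_def mem_map_VV using e .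
      have "(Gen (Suc m) (tag \<Sigma>') x u, Gen (Suc m) (tag \<Sigma>') y v) \<in> H m"
        apply (unfold H_def, rule CollectI)
        apply (rule exI[where x="\<Sigma>'"], rule exI[where x=x], rule exI[where x=u], rule exI[where x=y], rule exI[where x=v])
        using th e' by simp
      then have "(Gen (Suc m) (tag \<Sigma>') x u, Gen (Suc m) (tag \<Sigma>') y v) \<in> ER" using H_E E_ER by blast
      then show "ext_act P A act (\<tau> x) u = ext_act P A act (\<tau> y) v"
        using tact xy wfq_class_eq[OF wf_UD] by simp
    next
      fix x s X assume e: "EqVC x s X \<in> fset \<Sigma>"
      then have x: "x \<in> (\<Union>e\<in>fset \<Sigma>. eqn_vars e)" by force
      have XK: "X \<in> Ks" using e by (force simp: Ks_def)
      have e': "EqVC x s (\<phi> X) \<in> fset \<Sigma>'" unfolding \<Sigma>'_def mem_map_VC using e by blast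
      have "(Gen (Suc m) (tag \<Sigma>') x s, rep (\<phi> X)) \<in> K m"
        apply (unfold K_def, rule CollectI)
        apply (rule exI[where x="\<Sigma>'"], rule exI[where x=x], rule exI[where x=s], rule exI[where x="\<phi> X"])
        using th e' by simp
      then have k1: "(Gen (Suc m) (tag \<Sigma>') x s, rep (\<phi> X)) \<in> ER" using K_E E_ER by blast
      have "rep (\<phi> X) \<in> \<phi> X" using quot_rep(1)[OF wf_i \<phi>C[OF XK]] .
      then have "(rp X, rep (\<phi> X)) \<in> E m" by (simp add: \<phi>_def)
      then have k2: "(rp X, rep (\<phi> X)) \<in> ER" using E_ER by blast
      have "ER `` {Gen (Suc m) (tag \<Sigma>') x s} = ER `` {rep (\<phi> X)}" using wfq_class_eq[OF wf_UD k1] .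
      also have "\<dots> = ER `` {rp X}" using wfq_class_eq[OF wf_UD k2] by simp
      also have "\<dots> = X" using rp[OF XK] by simp
      finally show "ext_act P A act (\<tau> x) s = id X" using tact[OF x] by simp
    qed
  qed
qed

end




context ext begin

lemma retract_pure:
  assumes ret: "is_retract A act (ext_carrier P A act) (ext_act P A act) (ext_emb P A act)"
    and epure: "ppure P (ext_carrier P A act) (ext_act P A act)"
  shows "ppure P A act"
  unfolding ppure_def
proof (intro allI impI, elim conjE)
  fix \<Sigma> :: "('a, 's) eqn fset"
  assume ov: "over A \<Sigma>" and Pn: "P (nvars \<Sigma>)" and co: "consistent A act \<Sigma>"
  obtain g where g: "is_morph (ext_carrier P A act) (ext_act P A act) A act g"
    "\<forall>a\<in>A. g (ext_emb P A act a) = a" using ret by (auto simp: is_retract_def)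
  obtain B :: "('a + nat \<times> 's) set" and aB f \<sigma> where
    B: "is_act B aB" "is_morph A act B aB f" "inj_on f A"
      "\<forall>k\<in>(\<Union>e\<in>fset \<Sigma>. eqn_vars e). \<sigma> k \<in> B" "solves aB f \<sigma> \<Sigma>"
    using co by (rule consistentE)
  let ?X = "ext_carrier P A act" and ?aX = "ext_act P A act" and ?e = "ext_emb P A act"
  interpret am: amal A act ?X ?aX ?e "{()}" "\<lambda>_. B" "\<lambda>_. aB" "\<lambda>_. f"
    by unfold_locales (use A ext_is_act emb_morph B in auto)
  let ?M = "amal_car A (\<lambda>_. f) ?X {()} (\<lambda>_. B)"
  let ?aM = "amal_act A ?e (\<lambda>_. f) ?aX (\<lambda>_. aB)"
  let ?u = "amal_emb A ?e (\<lambda>_. f) ()"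
  define \<Sigma>' where "\<Sigma>' = fimage (eqn_map ?e) \<Sigma>"
  have vars': "(\<Union>e\<in>fset \<Sigma>'. eqn_vars e) = (\<Union>e\<in>fset \<Sigma>. eqn_vars e)" unfolding \<Sigma>'_def by (rule vars_map)
  have cst: "\<And>e a. e \<in> fset \<Sigma> \<Longrightarrow> a \<in> eqn_consts e \<Longrightarrow> a \<in> A" using ov by (auto simp: over_def)
  have ov': "over ?X \<Sigma>'" unfolding \<Sigma>'_def over_map using cst emb_morph by (fastforce simp: is_morph_def)
  have Pn': "P (nvars \<Sigma>')" using Pn unfolding \<Sigma>'_def nvars_map .
  have s1: "solves ?aM (?u \<circ> f) (?u \<circ> \<sigma>) \<Sigma>"
    using solves_morph[OF am.emb_morph[of "()"] B(4) B(5)] by simp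
  have s2: "solves ?aM (Inl \<circ> ?e) (?u \<circ> \<sigma>) \<Sigma>"
  proof -
    have "\<forall>e\<in>fset \<Sigma>. \<forall>a\<in>eqn_consts e. (?u \<circ> f) a = (Inl \<circ> ?e) a"
      using cst am.emb_f by simp
    then show ?thesis using s1 solves_cong by blast
  qed
  have co': "consistent ?X ?aX \<Sigma>'"
  proof (rule consistent_intro[OF ext_is_act am.M_act am.Inl_morph])
    show "inj_on Inl ?X" by simp
    show "\<forall>k\<in>(\<Union>e\<in>fset \<Sigma>'. eqn_vars e). (?u \<circ> \<sigma>) k \<in> ?M"
      using B(4) am.emb_in vars' by simp
    show "solves ?aM Inl (?u \<circ> \<sigma>) \<Sigma>'" unfolding \<Sigma>'_def solves_map by (rule s2)
  qed
  obtain \<tau> where \<tau>: "\<forall>k\<in>(\<Union>e\<in>fset \<Sigma>'. eqn_vars e). \<tau> k \<in> ?X" "solves ?aX id \<tau> \<Sigma>'"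
    using epure ov' Pn' co' unfolding ppure_def by blast
  have t1: "solves ?aX ?e \<tau> \<Sigma>" using \<tau>(2) unfolding \<Sigma>'_def solves_map by simp
  have t2: "solves act (g \<circ> ?e) (g \<circ> \<tau>) \<Sigma>"
    using solves_morph[OF g(1) _ t1] \<tau>(1) vars' by simp
  have t3: "solves act id (g \<circ> \<tau>) \<Sigma>"
  proof -
    have "\<forall>e\<in>fset \<Sigma>. \<forall>a\<in>eqn_consts e. (g \<circ> ?e) a = id a" using cst g(2) by simp
    then show ?thesis using t2 solves_cong by blast
  qed
  show "\<exists>\<sigma>. (\<forall>k\<in>(\<Union>e\<in>fset \<Sigma>. eqn_vars e). \<sigma> k \<in> A) \<and> solves act id \<sigma> \<Sigma>"
  proof (intro exI conjI)
    show "\<forall>k\<in>(\<Union>e\<in>fset \<Sigma>. eqn_vars e). (g \<circ> \<tau>) k \<in> A"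
      using \<tau>(1) vars' g(1) by (simp add: is_morph_def)
    show "solves act id (g \<circ> \<tau>) \<Sigma>" by (rule t3)
  qed
qed

end




context ext begin

definition sol :: "('a, 's) eqn fset \<Rightarrow> nat \<Rightarrow> 'a" where
  "sol \<Sigma> = (SOME \<sigma>. (\<forall>k\<in>(\<Union>e\<in>fset \<Sigma>. eqn_vars e). \<sigma> k \<in> A) \<and> solves act id \<sigma> \<Sigma>)"

primrec G :: "nat \<Rightarrow> ('a, 's) elt \<Rightarrow> 'a" where
  "G 0 = (\<lambda>d. case d of Base a \<Rightarrow> a | Gen j T k s \<Rightarrow> undefined)"
| "G (Suc i) = (\<lambda>d. case d of Base a \<Rightarrow> a | Gen j T k s \<Rightarrow>
      (if j = Suc i then act (sol (fimage (eqn_map (G i)) T) k) s else G i d))"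

lemma G_Base: "G i (Base a) = a" by (cases i) auto

lemma G_ext: "d \<in> D i \<Longrightarrow> G (Suc i) d = G i d"
proof -
  assume d: "d \<in> D i"
  have "case d of Base _ \<Rightarrow> True | Gen j _ _ _ \<Rightarrow> j \<le> i" using inv_all[of i] d by (simp add: inv_def)
  then show ?thesis by (cases d) (auto simp: G_Base)
qed

lemma G_new: "inv i \<Longrightarrow> Gen (Suc i) T k s \<in> N i \<Longrightarrow> G (Suc i) (Gen (Suc i) T k s) = act (sol (fimage (eqn_map (G i)) T) k) s"
  by simp

definition "GI i \<longleftrightarrow> (\<forall>d\<in>D i. G i d \<in> A) \<and> (\<forall>x y. (x, y) \<in> E i \<longrightarrow> G i x = G i y)
   \<and> (\<forall>d\<in>D i. \<forall>s. G i (ract act d s) = act (G i d) s)"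

lemma GI0: "GI 0"
  using A by (auto simp: GI_def D0 E0 is_act_def)

lemma GI_step:
  assumes pp: "ppure P A act" and IH: "GI i"
  shows "GI (Suc i)"
proof -
  have w: "wfq A act (D i) (E i)" by (rule wf_i)
  have G1: "\<And>d. d \<in> D i \<Longrightarrow> G i d \<in> A" using IH by (simp add: GI_def)
  have G2: "\<And>x y. (x, y) \<in> E i \<Longrightarrow> G i x = G i y" using IH by (simp add: GI_def)
  have G3: "\<And>d s. d \<in> D i \<Longrightarrow> G i (ract act d s) = act (G i d) s" using IH by (simp add: GI_def)
  define g where "g c = G i (rep c)" for c
  have gm: "is_morph (Cq i) (qa i) A act g"
    unfolding is_morph_def
  proof (intro conjI ballI allI)
    fix c assume c: "c \<in> Cq i"
    then show "g c \<in> A" using quot_rep(2)[OF w c] G1 by (simp add: g_def)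
  next
    fix c s assume c: "c \<in> Cq i"
    have rc: "rep c \<in> D i" "E i `` {rep c} = c" using quot_rep[OF w c] by auto
    have q: "qa i c s = E i `` {ract act (rep c) s}" using qact_class[OF w rc(1), of s] rc(2) by simp
    have rD: "ract act (rep c) s \<in> D i" using w rc(1) by (simp add: wfq_def)
    then have "qa i c s \<in> Cq i" using q by (simp add: quotientI)
    then have "rep (qa i c s) \<in> qa i c s" using quot_rep(1)[OF w] by blast
    then have "(ract act (rep c) s, rep (qa i c s)) \<in> E i" using q by simp
    then have "G i (rep (qa i c s)) = G i (ract act (rep c) s)" using G2 by metis
    then show "g (qa i c s) = act (g c) s" using G3[OF rc(1)] by (simp add: g_def)
  qed
  have Tg: "\<And>\<Sigma>. fimage (eqn_map (G i)) (tag \<Sigma>) = fimage (eqn_map g) \<Sigma>"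
    by (simp add: tag_def fimage_fimage eqn_map_comp comp_def g_def[abs_def])
  have solv: "\<And>\<Sigma>. \<Sigma> \<in> Th i \<Longrightarrow> (\<forall>k\<in>(\<Union>e\<in>fset \<Sigma>. eqn_vars e). sol (fimage (eqn_map g) \<Sigma>) k \<in> A)
      \<and> solves act id (sol (fimage (eqn_map g) \<Sigma>)) (fimage (eqn_map g) \<Sigma>)"
  proof -
    fix \<Sigma> assume th: "\<Sigma> \<in> Th i"
    have ov: "over (Cq i) \<Sigma>" and Pn: "P (nvars \<Sigma>)" and co: "consistent (Cq i) (qa i) \<Sigma>"
      using th by (simp_all add: Th_def)
    obtain B :: "(('a, 's) elt set + nat \<times> 's) set" and aB f \<sigma> where
      B: "is_act B aB" "is_morph (Cq i) (qa i) B aB f" "inj_on f (Cq i)"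
        "\<forall>k\<in>(\<Union>e\<in>fset \<Sigma>. eqn_vars e). \<sigma> k \<in> B" "solves aB f \<sigma> \<Sigma>"
      using co by (rule consistentE)
    interpret am: amal "Cq i" "qa i" A act g "{()}" "\<lambda>_. B" "\<lambda>_. aB" "\<lambda>_. f"
      by unfold_locales (use A quot_act[OF A w] gm B in auto)
    let ?M = "amal_car (Cq i) (\<lambda>_. f) A {()} (\<lambda>_. B)"
    let ?aM = "amal_act (Cq i) g (\<lambda>_. f) act (\<lambda>_. aB)"
    let ?u = "amal_emb (Cq i) g (\<lambda>_. f) ()"
    define \<Sigma>' where "\<Sigma>' = fimage (eqn_map g) \<Sigma>"
    have vars': "(\<Union>e\<in>fset \<Sigma>'. eqn_vars e) = (\<Union>e\<in>fset \<Sigma>. eqn_vars e)" unfolding \<Sigma>'_def by (rule vars_map)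
    have cst: "\<And>e a. e \<in> fset \<Sigma> \<Longrightarrow> a \<in> eqn_consts e \<Longrightarrow> a \<in> Cq i" using ov by (auto simp: over_def)
    have ov': "over A \<Sigma>'" unfolding \<Sigma>'_def over_map using cst gm by (fastforce simp: is_morph_def)
    have Pn': "P (nvars \<Sigma>')" using Pn unfolding \<Sigma>'_def nvars_map .
    have s1: "solves ?aM (?u \<circ> f) (?u \<circ> \<sigma>) \<Sigma>"
      using solves_morph[OF am.emb_morph[of "()"] B(4) B(5)] by simp
    have s2: "solves ?aM (Inl \<circ> g) (?u \<circ> \<sigma>) \<Sigma>"
    proof -
      have "\<forall>e\<in>fset \<Sigma>. \<forall>a\<in>eqn_consts e. (?u \<circ> f) a = (Inl \<circ> g) a"
        using cst am.emb_f by simp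
      then show ?thesis using s1 solves_cong by blast
    qed
    have co': "consistent A act \<Sigma>'"
    proof (rule consistent_intro[OF A am.M_act am.Inl_morph])
      show "inj_on Inl A" by simp
      show "\<forall>k\<in>(\<Union>e\<in>fset \<Sigma>'. eqn_vars e). (?u \<circ> \<sigma>) k \<in> ?M"
        using B(4) am.emb_in vars' by simp
      show "solves ?aM Inl (?u \<circ> \<sigma>) \<Sigma>'" unfolding \<Sigma>'_def solves_map by (rule s2)
    qed
    have "\<exists>\<sigma>. (\<forall>k\<in>(\<Union>e\<in>fset \<Sigma>'. eqn_vars e). \<sigma> k \<in> A) \<and> solves act id \<sigma> \<Sigma>'"
      using pp ov' Pn' co' unfolding ppure_def by blast
    then have "(\<forall>k\<in>(\<Union>e\<in>fset \<Sigma>'. eqn_vars e). sol \<Sigma>' k \<in> A) \<and> solves act id (sol \<Sigma>') \<Sigma>'"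
      unfolding sol_def by (rule someI_ex)
    then show "(\<forall>k\<in>(\<Union>e\<in>fset \<Sigma>. eqn_vars e). sol (fimage (eqn_map g) \<Sigma>) k \<in> A)
      \<and> solves act id (sol (fimage (eqn_map g) \<Sigma>)) (fimage (eqn_map g) \<Sigma>)"
      unfolding vars'[symmetric] \<Sigma>'_def .
  qed
  have Gnew: "\<And>\<Sigma> k s. G (Suc i) (Gen (Suc i) (tag \<Sigma>) k s) = act (sol (fimage (eqn_map g) \<Sigma>) k) s"
    by (simp only: G.simps elt.case simp_thms if_True Tg)
  let ?D = "D i \<union> N i" and ?R = "E i \<union> H i \<union> K i"
  have cl: "\<forall>x\<in>?D. \<forall>s. ract act x s \<in> ?D" using w N_ract by (auto simp: wfq_def)
  have NA: "\<And>x. x \<in> N i \<Longrightarrow> G (Suc i) x \<in> A"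
  proof -
    fix x assume "x \<in> N i"
    then obtain \<Sigma> k u where x: "x = Gen (Suc i) (tag \<Sigma>) k u" "\<Sigma> \<in> Th i" "k \<in> (\<Union>e\<in>fset \<Sigma>. eqn_vars e)"
      by (rule NE)
    have "sol (fimage (eqn_map g) \<Sigma>) k \<in> A" using solv[OF x(2)] x(3) by blast
    moreover have "G (Suc i) x = act (sol (fimage (eqn_map g) \<Sigma>) k) u" using x(1) Gnew by simp
    ultimately show "G (Suc i) x \<in> A" using A by (simp add: is_actD)
  qed
  have hm: "\<forall>x\<in>?D. \<forall>s. G (Suc i) (ract act x s) = act (G (Suc i) x) s"
  proof (intro ballI allI)
    fix x s assume "x \<in> ?D"
    then show "G (Suc i) (ract act x s) = act (G (Suc i) x) s"
    proof
      assume x: "x \<in> D i"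
      then have "ract act x s \<in> D i" using w by (simp add: wfq_def)
      then show ?thesis using x G_ext G3 by simp
    next
      assume "x \<in> N i"
      then obtain \<Sigma> k u where x: "x = Gen (Suc i) (tag \<Sigma>) k u" "\<Sigma> \<in> Th i" "k \<in> (\<Union>e\<in>fset \<Sigma>. eqn_vars e)"
        by (rule NE)
      have "sol (fimage (eqn_map g) \<Sigma>) k \<in> A" using solv[OF x(2)] x(3) by blast
      moreover have "G (Suc i) (ract act x s) = act (sol (fimage (eqn_map g) \<Sigma>) k) (u * s)"
        using x(1) Gnew by simp
      moreover have "G (Suc i) x = act (sol (fimage (eqn_map g) \<Sigma>) k) u" using x(1) Gnew by simp
      ultimately show ?thesis using A by (simp add: is_actD)
    qed
  qed
  have R: "?R \<subseteq> ?D \<times> ?D"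
  proof -
    have "E (Suc i) \<subseteq> (D (Suc i)) \<times> (D (Suc i))" using wf_i[of "Suc i"] by (simp add: wfq_def)
    moreover have "?R \<subseteq> E (Suc i)" by (auto simp: ES intro: congr.gen)
    ultimately show ?thesis unfolding DS by (rule order_trans[rotated])
  qed
  have hR: "\<forall>(x, y)\<in>?R. G (Suc i) x = G (Suc i) y"
  proof (clarify)
    fix x y assume xy: "(x, y) \<in> ?R"
    show "G (Suc i) x = G (Suc i) y"
    proof (cases "(x, y) \<in> E i")
      case True
      then have "x \<in> D i" "y \<in> D i" using w by (auto simp: wfq_def)
      then show ?thesis using True G2 G_ext by simp
    next
      case F1: False
      show ?thesis
      proof (cases "(x, y) \<in> H i")
        case True
        then obtain \<Sigma> a u b v where p: "x = Gen (Suc i) (tag \<Sigma>) a u" "y = Gen (Suc i) (tag \<Sigma>) b v"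
          "\<Sigma> \<in> Th i" "EqVV a u b v \<in> fset \<Sigma>" by (auto simp: H_def)
        have "EqVV a u b v \<in> fset (fimage (eqn_map g) \<Sigma>)" unfolding mem_map_VV by (rule p(4))
        then show ?thesis using solv[OF p(3)] p(1,2) Gnew by (simp add: solves_def2)
      next
        case False
        with F1 xy have "(x, y) \<in> K i" by blast
        then obtain \<Sigma> a s c where p: "x = Gen (Suc i) (tag \<Sigma>) a s" "y = rep c"
          "\<Sigma> \<in> Th i" "EqVC a s c \<in> fset \<Sigma>" by (auto simp: K_def)
        have c: "c \<in> Cq i" using p(3,4) over_const by (auto simp: Th_def)
        have "EqVC a s (g c) \<in> fset (fimage (eqn_map g) \<Sigma>)" unfolding mem_map_VC using p(4) by blast
        then have "G (Suc i) x = g c" using solv[OF p(3)] p(1) Gnew by (simp add: solves_def2)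
        moreover have "G (Suc i) y = g c" using p(2) quot_rep(2)[OF w c] G_ext by (simp add: g_def)
        ultimately show ?thesis by simp
      qed
    qed
  qed
  show "GI (Suc i)"
    unfolding GI_def DS
  proof (intro conjI ballI allI impI)
    fix d assume "d \<in> ?D"
    then show "G (Suc i) d \<in> A" using G1 G_ext NA by auto
  next
    fix x y assume "(x, y) \<in> E (Suc i)"
    then show "G (Suc i) x = G (Suc i) y" using congr_kernel[OF R cl hm hR] by (simp add: ES)
  next
    fix d s assume "d \<in> ?D"
    then show "G (Suc i) (ract act d s) = act (G (Suc i) d) s" using hm by blast
  qed
qed

end




context ext begin

lemma GI_all: "ppure P A act \<Longrightarrow> GI i"
  by (induction i) (use GI0 GI_step in auto)

lemma G_agree: "d \<in> D i \<Longrightarrow> i \<le> j \<Longrightarrow> G j d = G i d"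
proof (induction j)
  case (Suc j)
  show ?case
  proof (cases "i = Suc j")
    case False
    then have "i \<le> j" using Suc by simp
    moreover then have "d \<in> D j" using D_mono Suc by blast
    ultimately show ?thesis using Suc G_ext by simp
  qed simp
qed simp

definition "Gall d = G (LEAST i. d \<in> D i) d"

lemma Gall_eq: "d \<in> D i \<Longrightarrow> Gall d = G i d"
proof -
  assume d: "d \<in> D i"
  let ?l = "LEAST i. d \<in> D i"
  have "d \<in> D ?l" using d by (rule LeastI)
  moreover have "?l \<le> i" using d by (rule Least_le)
  ultimately have "G i d = G ?l d" by (rule G_agree)
  then show ?thesis unfolding Gall_def by simp
qed

theorem pure_retract:
  assumes pp: "ppure P A act"
  shows "is_retract A act (ext_carrier P A act) (ext_act P A act) (ext_emb P A act)"
proof -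
  have GI: "\<And>i. GI i" using GI_all[OF pp] .
  define r where "r X = Gall (rep X)" for X
  have rc: "\<And>X d i. X \<in> ext_carrier P A act \<Longrightarrow> d \<in> X \<Longrightarrow> d \<in> D i \<Longrightarrow> r X = G i d"
  proof -
    fix X d i assume X: "X \<in> ext_carrier P A act" and dX: "d \<in> X" and di: "d \<in> D i"
    have XU: "X \<in> UD // ER" using X by (simp add: carrier_eq)
    have "rep X \<in> X" using quot_rep(1)[OF wf_UD XU] .
    then have "ER `` {rep X} = X" "ER `` {d} = X" using quot_rep(3)[OF wf_UD XU]
      wfq_class_eq[OF wf_UD] dX by (auto elim!: quotientE simp: XU)
    then have "(d, rep X) \<in> ER" using wfq_self[OF wf_UD] quot_rep(2)[OF wf_UD XU] by blast
    then obtain j where j: "(d, rep X) \<in> E j" by (auto simp: ER_def')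
    have "d \<in> D j" "rep X \<in> D j" using wf_i[of j] j by (auto simp: wfq_def)
    then have "G j d = G j (rep X)" using GI[of j] j by (simp add: GI_def)
    moreover have "Gall (rep X) = G j (rep X)" using Gall_eq \<open>rep X \<in> D j\<close> by blast
    moreover have "Gall d = G j d" using Gall_eq \<open>d \<in> D j\<close> by blast
    moreover have "Gall d = G i d" using Gall_eq di by blast
    ultimately show "r X = G i d" by (simp add: r_def)
  qed
  show ?thesis
    unfolding is_retract_def
  proof (intro exI conjI)
    show "is_morph (ext_carrier P A act) (ext_act P A act) A act r"
      unfolding is_morph_def
    proof (intro conjI ballI allI)
      fix X assume X: "X \<in> ext_carrier P A act"
      then have "X \<in> UD // ER" by (simp add: carrier_eq)
      then obtain d where d: "d \<in> UD" "X = ER `` {d}" by (elim quotientE) blast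
      then obtain i where di: "d \<in> D i" by blast
      have dX: "d \<in> X" using d wfq_self[OF wf_UD] by simp
      show "r X \<in> A" using rc[OF X dX di] GI[of i] di by (simp add: GI_def)
      fix s
      have rd: "ract act d s \<in> D i" using wf_i[of i] di by (simp add: wfq_def)
      have e: "ext_act P A act X s = ER `` {ract act d s}" using qact_class[OF wf_UD d(1)] d(2) by (simp add: act_eq)
      have "ext_act P A act X s \<in> ext_carrier P A act" using ext_is_act X by (simp add: is_actD)
      moreover have "ract act d s \<in> ext_act P A act X s" using e wfq_self[OF wf_UD] rd by blast
      ultimately have "r (ext_act P A act X s) = G i (ract act d s)" using rc rd by blast
      also have "\<dots> = act (G i d) s" using GI[of i] di by (simp add: GI_def)
      also have "\<dots> = act (r X) s" using rc[OF X dX di] by simp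
      finally show "r (ext_act P A act X s) = act (r X) s" .
    qed
    show "\<forall>a\<in>A. r (ext_emb P A act a) = a"
    proof
      fix a assume a: "a \<in> A"
      have b: "Base a \<in> D 0" using a by (simp add: D0)
      have "ext_emb P A act a \<in> ext_carrier P A act" using emb_morph a by (simp add: is_morph_def)
      moreover have "Base a \<in> ext_emb P A act a" using wfq_self[OF wf_UD] b by (auto simp: ext_emb_eq)
      ultimately have "r (ext_emb P A act a) = G 0 (Base a)" using rc b by blast
      then show "r (ext_emb P A act a) = a" by (simp add: G_Base)
    qed
  qed
qed

theorem ext_main:
  "ppure P (ext_carrier P A act) (ext_act P A act) \<and>
   (ppure P A act \<longleftrightarrow> is_retract A act (ext_carrier P A act) (ext_act P A act) (ext_emb P A act))"
  using ext_pure pure_retract retract_pure by blast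

end

lemma n_abs_pure_pp: "n_abs_pure n X act = ppure (\<lambda>m. m \<le> n) X act"
  by (simp add: n_abs_pure_def ppure_def)

lemma abs_pure_pp: "abs_pure X act = ppure (\<lambda>m. True) X act"
  unfolding abs_pure_def n_abs_pure_def ppure_def by blast

theorem mainTheorem16:
  fixes A :: "'a set" and act :: "'a \<Rightarrow> 's::monoid_mult \<Rightarrow> 'a"
  assumes "is_act A act"
  shows "(\<forall>n. n_abs_pure n (An_carrier n A act) (An_act n A act))
       \<and> abs_pure (Aw_carrier A act) (Aw_act A act)
       \<and> (\<forall>n. n_abs_pure n A act \<longleftrightarrow>
              is_retract A act (An_carrier n A act) (An_act n A act) (An_emb n A act))
       \<and> (abs_pure A act \<longleftrightarrow> is_retract A act (Aw_carrier A act) (Aw_act A act) (Aw_emb A act))"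
proof -
  have n: "\<And>n. ppure (\<lambda>m. m \<le> n) (An_carrier n A act) (An_act n A act) \<and>
      (ppure (\<lambda>m. m \<le> n) A act \<longleftrightarrow> is_retract A act (An_carrier n A act) (An_act n A act) (An_emb n A act))"
  proof -
    fix n
    interpret e: ext "\<lambda>m. m \<le> n" A act using assms by unfold_locales
    show "?thesis n" by (rule e.ext_main)
  qed
  interpret w: ext "\<lambda>m. True" A act using assms by unfold_locales
  show ?thesis using n w.ext_main by (simp add: n_abs_pure_pp abs_pure_pp)
qed


end
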